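(* Let $B$ be a nonempty barrier of a $3$-connected cubic graph $G$, and let $H[A,B]$ be the corresponding core. A vertex $b\in B$ is $\lambda$-matchable in $G$ if and only if there exists $a\in A$ such that (i) the pair $(a,b)$ is $\lambda$-matchable in $H$, and (ii) the contraction vertex of the $B$-fragment corresponding to $a$ is $\lambda$-matchable in that $B$-fragment.
   Context: A barrier of a graph $G$ with a perfect matching is a set $S\subseteq V(G)$ such that $G-S$ has exactly $|S|$ components of odd order. For a barrier $B$ of a matching covered graph, every component of $G-B$ is odd; the core $H[A,B]$ is the bipartite graph obtained by shrinking each component of $G-B$ to a single vertex (these vertices form $A$). For a component $J$ of $G-B$, the $B$-fragment $G/\overline{V(J)}$ is obtained by shrinking $V(G)-V(J)$ to a single contraction vertex; it corresponds to the vertex of $A$ obtained from $J$. For a vertex $v$ of a cubic graph, $v$ is $\lambda$-matchable if there is a spanning subgraph in which $v$ has degree $3$ and every other vertex degree $1$. For a bipartite cubic graph, a pair $(a,b)$ from different color classes is $\lambda$-matchable if there is a spanning subgraph in which $a,b$ have degree $3$ and all other vertices degree $1$. *)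

theory Defs
  imports Main
begin

text \<open>Finite loopless multigraphs: a vertex set, an edge set, and an endpoint map
  sending each edge to a 2-element set of vertices (parallel edges allowed).\<close>

type_synonym ('v,'e) mgraph = "'v set \<times> 'e set \<times> ('e \<Rightarrow> 'v set)"

definition verts :: "('v,'e) mgraph \<Rightarrow> 'v set" where "verts G = fst G"
definition edges :: "('v,'e) mgraph \<Rightarrow> 'e set" where "edges G = fst (snd G)"
definition endpts :: "('v,'e) mgraph \<Rightarrow> 'e \<Rightarrow> 'v set" where "endpts G = snd (snd G)"

definition mgraph :: "('v,'e) mgraph \<Rightarrow> bool" where
  "mgraph G \<longleftrightarrow> finite (verts G) \<and> finite (edges G) \<and>
     (\<forall>e\<in>edges G. endpts G e \<subseteq> verts G \<and> card (endpts G e) = 2)"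

definition deg_in :: "'e set \<Rightarrow> ('v,'e) mgraph \<Rightarrow> 'v \<Rightarrow> nat" where
  "deg_in F G v = card {e\<in>F. v \<in> endpts G e}"

definition cubic :: "('v,'e) mgraph \<Rightarrow> bool" where
  "cubic G \<longleftrightarrow> mgraph G \<and> (\<forall>v\<in>verts G. deg_in (edges G) G v = 3)"

definition perfect_matching :: "('v,'e) mgraph \<Rightarrow> 'e set \<Rightarrow> bool" where
  "perfect_matching G M \<longleftrightarrow> M \<subseteq> edges G \<and> (\<forall>v\<in>verts G. deg_in M G v = 1)"

definition has_perfect_matching :: "('v,'e) mgraph \<Rightarrow> bool" where
  "has_perfect_matching G \<longleftrightarrow> (\<exists>M. perfect_matching G M)"

definition adj_minus :: "('v,'e) mgraph \<Rightarrow> 'v set \<Rightarrow> ('v \<times> 'v) set" where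
  "adj_minus G S = {(u,v). u \<in> verts G - S \<and> v \<in> verts G - S \<and>
                          (\<exists>e\<in>edges G. endpts G e = {u,v})}"

definition comp_of :: "('v,'e) mgraph \<Rightarrow> 'v set \<Rightarrow> 'v \<Rightarrow> 'v set" where
  "comp_of G S v = (adj_minus G S)\<^sup>* `` {v}"

definition components :: "('v,'e) mgraph \<Rightarrow> 'v set \<Rightarrow> 'v set set" where
  "components G S = comp_of G S ` (verts G - S)"

definition odd_components :: "('v,'e) mgraph \<Rightarrow> 'v set \<Rightarrow> 'v set set" where
  "odd_components G S = {C \<in> components G S. odd (card C)}"

definition barrier :: "('v,'e) mgraph \<Rightarrow> 'v set \<Rightarrow> bool" where
  "barrier G S \<longleftrightarrow> has_perfect_matching G \<and> S \<subseteq> verts G \<and>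
     card (odd_components G S) = card S"

definition k_connected :: "nat \<Rightarrow> ('v,'e) mgraph \<Rightarrow> bool" where
  "k_connected k G \<longleftrightarrow> card (verts G) > k \<and>
     (\<forall>S \<subseteq> verts G. card S < k \<longrightarrow> card (components G S) = 1)"

definition contract :: "('v \<Rightarrow> 'w) \<Rightarrow> ('v,'e) mgraph \<Rightarrow> ('w,'e) mgraph" where
  "contract f G = (f ` verts G, {e\<in>edges G. card (f ` endpts G e) = 2}, \<lambda>e. f ` endpts G e)"

text \<open>The core H[A,B]: each component J of G - B is shrunk to the vertex J, each
  vertex b of B is represented by {b}.  So A = components G B.\<close>
definition core :: "('v,'e) mgraph \<Rightarrow> 'v set \<Rightarrow> ('v set,'e) mgraph" where
  "core G B = contract (\<lambda>v. if v \<in> B then {v} else comp_of G B v) G"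

text \<open>The B-fragment G / (V(G) - V(J)): vertices of J represented by singletons,
  the contraction vertex is the set V(G) - V(J).\<close>
definition fragment :: "('v,'e) mgraph \<Rightarrow> 'v set \<Rightarrow> ('v set,'e) mgraph" where
  "fragment G J = contract (\<lambda>v. if v \<in> J then {v} else verts G - J) G"

definition lambda_matchable :: "('v,'e) mgraph \<Rightarrow> 'v \<Rightarrow> bool" where
  "lambda_matchable G v \<longleftrightarrow> v \<in> verts G \<and> (\<exists>F \<subseteq> edges G. deg_in F G v = 3 \<and>
     (\<forall>u\<in>verts G - {v}. deg_in F G u = 1))"

definition lambda_matchable_pair :: "('v,'e) mgraph \<Rightarrow> 'v \<Rightarrow> 'v \<Rightarrow> bool" where
  "lambda_matchable_pair G a b \<longleftrightarrow> a \<in> verts G \<and> b \<in> verts G \<and> a \<noteq> b \<and>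
     (\<exists>F \<subseteq> edges G. deg_in F G a = 3 \<and> deg_in F G b = 3 \<and>
        (\<forall>u\<in>verts G - {a,b}. deg_in F G u = 1))"

end

theory Submission
  imports Defs
begin


lemma hall_sdr:
  fixes A :: "'i \<Rightarrow> 'a set"
  assumes "finite I" "\<forall>i\<in>I. finite (A i)" "\<forall>J\<subseteq>I. card J \<le> card (\<Union>(A ` J))"
  shows "\<exists>f. inj_on f I \<and> (\<forall>i\<in>I. f i \<in> A i)"
  using assms
proof (induction "card I" arbitrary: I A rule: less_induct)
  case less
  note fin = less.prems(1) and finA = less.prems(2) and hc = less.prems(3)
  show ?case
  proof (cases "I = {}")
    case True then show ?thesis by auto
  next
    case Ine: False
    show ?thesis
    proof (cases "\<exists>J. J \<subseteq> I \<and> J \<noteq> {} \<and> J \<noteq> I \<and> card (\<Union>(A ` J)) = card J")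
      case True
      then obtain J where J: "J \<subseteq> I" "J \<noteq> {}" "J \<noteq> I" "card (\<Union>(A ` J)) = card J" by blast
      define X where "X = \<Union>(A ` J)"
      have finJ: "finite J" using J fin finite_subset by blast
      have finX: "finite X" unfolding X_def using finJ finA J by auto
      have cJ: "card J < card I" using J fin by (meson psubsetI psubset_card_mono)
      have hcJ: "\<forall>K\<subseteq>J. card K \<le> card (\<Union>(A ` K))"
      proof (intro allI impI)
        fix K assume "K \<subseteq> J" then have "K \<subseteq> I" using J(1) by blast
        then show "card K \<le> card (\<Union>(A ` K))" using hc by blast
      qed
      have finAJ: "\<forall>i\<in>J. finite (A i)" using finA J(1) by blast
      obtain f1 where f1: "inj_on f1 J" "\<forall>i\<in>J. f1 i \<in> A i"
        using less.hyps[OF cJ finJ finAJ hcJ] by blast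
      define A' where "A' = (\<lambda>i. A i - X)"
      have "card J > 0" using J finJ by (simp add: card_gt_0_iff)
      then have cIJ: "card (I - J) < card I" using J fin finJ card_mono[OF fin J(1)]
        by (simp add: card_Diff_subset)
      have hc2: "\<forall>K\<subseteq>I - J. card K \<le> card (\<Union>(A' ` K))"
      proof (intro allI impI)
        fix K assume K: "K \<subseteq> I - J"
        have finK: "finite K" using K fin finite_subset by blast
        have eq: "\<Union>(A' ` K) = \<Union>(A ` (K \<union> J)) - X" unfolding A'_def X_def by auto
        have sub: "X \<subseteq> \<Union>(A ` (K \<union> J))" unfolding X_def by auto
        have finU: "finite (\<Union>(A ` (K \<union> J)))" using finK finJ finA K J by auto
        have "K \<union> J \<subseteq> I" using K J by blast
        then have "card (K \<union> J) \<le> card (\<Union>(A ` (K \<union> J)))" using hc by blast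
        moreover have "card (K \<union> J) = card K + card J" using K finK finJ
          by (subst card_Un_disjoint) auto
        ultimately show "card K \<le> card (\<Union>(A' ` K))"
          unfolding eq using card_Diff_subset[OF finX sub] J(4) X_def by simp
      qed
      obtain f2 where f2: "inj_on f2 (I - J)" "\<forall>i\<in>I - J. f2 i \<in> A' i"
        using less.hyps[OF cIJ _ _ hc2] fin finA unfolding A'_def by auto
      define f where "f = (\<lambda>i. if i \<in> J then f1 i else f2 i)"
      have inX: "\<forall>i\<in>J. f1 i \<in> X" using f1 unfolding X_def by auto
      have ninX: "\<forall>i\<in>I-J. f2 i \<notin> X" using f2 unfolding A'_def by auto
      have "inj_on f I"
        unfolding inj_on_def f_def using f1(1) f2(1) inX ninX
        by (smt (verit, ccfv_SIG) DiffI inj_on_contraD)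
      moreover have "\<forall>i\<in>I. f i \<in> A i" using f1 f2 unfolding f_def A'_def by auto
      ultimately show ?thesis by blast
    next
      case False
      have strict: "\<forall>J. J \<subseteq> I \<and> J \<noteq> {} \<and> J \<noteq> I \<longrightarrow> card J < card (\<Union>(A ` J))"
        using False hc le_neq_implies_less by metis
      obtain i0 where i0: "i0 \<in> I" using Ine by blast
      have "{i0} \<subseteq> I" using i0 by blast
      then have "card {i0} \<le> card (\<Union>(A ` {i0}))" using hc by blast
      then have "card {i0} \<le> card (A i0)" by simp
      then have "A i0 \<noteq> {}" by auto
      then obtain x where x: "x \<in> A i0" by blast
      define A' where "A' = (\<lambda>i. A i - {x})"
      have "card I > 0" using fin i0 by (auto simp: card_gt_0_iff)
      then have cI: "card (I - {i0}) < card I" using fin i0 by simp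
      have hc2: "\<forall>K\<subseteq>I - {i0}. card K \<le> card (\<Union>(A' ` K))"
      proof (intro allI impI)
        fix K assume K: "K \<subseteq> I - {i0}"
        show "card K \<le> card (\<Union>(A' ` K))"
        proof (cases "K = {}")
          case True then show ?thesis by simp
        next
          case False
          have finK: "finite K" using K fin finite_subset by blast
          have "K \<noteq> I" using K i0 by auto
          then have lt: "card K < card (\<Union>(A ` K))" using strict K False by auto
          have eq: "\<Union>(A' ` K) = \<Union>(A ` K) - {x}" unfolding A'_def by auto
          have "card (\<Union>(A ` K)) - 1 \<le> card (\<Union>(A ` K) - {x})" by (simp add: card_Diff_singleton_if)
          then show ?thesis unfolding eq using lt by linarith
        qed
      qed
      obtain f' where f': "inj_on f' (I - {i0})" "\<forall>i\<in>I - {i0}. f' i \<in> A' i"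
        using less.hyps[OF cI _ _ hc2] fin finA unfolding A'_def by auto
      define f where "f = f'(i0 := x)"
      have "inj_on f I"
        unfolding inj_on_def f_def using f' unfolding A'_def inj_on_def
        by (metis DiffE DiffI fun_upd_other fun_upd_same singletonD singletonI)
      moreover have "\<forall>i\<in>I. f i \<in> A i" using f' x unfolding f_def A'_def by auto
      ultimately show ?thesis by blast
    qed
  qed
qed


definition rel_on :: "('a \<Rightarrow> 'a \<Rightarrow> bool) \<Rightarrow> 'a set \<Rightarrow> ('a \<times> 'a) set" where
  "rel_on R W = {(a,b). a \<in> W \<and> b \<in> W \<and> R a b}"
definition cmp :: "('a \<Rightarrow> 'a \<Rightarrow> bool) \<Rightarrow> 'a set \<Rightarrow> 'a \<Rightarrow> 'a set" where
  "cmp R W v = (rel_on R W)\<^sup>* `` {v}"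
definition cmps :: "('a \<Rightarrow> 'a \<Rightarrow> bool) \<Rightarrow> 'a set \<Rightarrow> 'a set set" where
  "cmps R W = cmp R W ` W"
definition oddc :: "('a \<Rightarrow> 'a \<Rightarrow> bool) \<Rightarrow> 'a set \<Rightarrow> nat" where
  "oddc R W = card {C \<in> cmps R W. odd (card C)}"
definition pm :: "('a \<Rightarrow> 'a \<Rightarrow> bool) \<Rightarrow> 'a set \<Rightarrow> ('a \<Rightarrow> 'a) \<Rightarrow> bool" where
  "pm R W m \<longleftrightarrow> (\<forall>v\<in>W. m v \<in> W \<and> m v \<noteq> v \<and> m (m v) = v \<and> R v (m v))"
definition symR :: "('a \<Rightarrow> 'a \<Rightarrow> bool) \<Rightarrow> bool" where
  "symR R \<longleftrightarrow> (\<forall>x y. R x y \<longrightarrow> R y x)"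

lemma cmp_self: "v \<in> cmp R W v"
  unfolding cmp_def by auto

lemma rtr_in: "(v,y) \<in> (rel_on R W)\<^sup>* \<Longrightarrow> y = v \<or> y \<in> W"
  by (induction rule: rtrancl_induct) (auto simp: rel_on_def)

lemma cmp_sub: "v \<in> W \<Longrightarrow> cmp R W v \<subseteq> W"
  unfolding cmp_def using rtr_in by fastforce

lemma rtr_sym: assumes s: "symR R" and p: "(v,y) \<in> (rel_on R W)\<^sup>*" shows "(y,v) \<in> (rel_on R W)\<^sup>*"
  using p
proof (induction rule: rtrancl_induct)
  case base then show ?case by simp
next
  case (step y z)
  then have "(z,y) \<in> rel_on R W" using s unfolding rel_on_def symR_def by auto
  then show ?case using step by (meson converse_rtrancl_into_rtrancl)
qed

lemma cmp_eq: assumes s: "symR R" and y: "y \<in> cmp R W v" shows "cmp R W y = cmp R W v"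
proof -
  have vy: "(v,y) \<in> (rel_on R W)\<^sup>*" using y unfolding cmp_def by auto
  have yv: "(y,v) \<in> (rel_on R W)\<^sup>*" using rtr_sym[OF s vy] .
  show ?thesis unfolding cmp_def using rtrancl_trans[OF vy] rtrancl_trans[OF yv] by auto
qed

lemma cmp_adj: "symR R \<Longrightarrow> x \<in> W \<Longrightarrow> y \<in> W \<Longrightarrow> R x y \<Longrightarrow> cmp R W x = cmp R W y"
proof -
  assume a: "symR R" "x \<in> W" "y \<in> W" "R x y"
  then have "y \<in> cmp R W x" unfolding cmp_def rel_on_def by auto
  then show ?thesis using cmp_eq[OF a(1)] by metis
qed

lemma cmp_local:
  assumes "U \<subseteq> W'" "W' \<subseteq> W" "\<forall>a\<in>U. \<forall>b\<in>W. R a b \<longrightarrow> b \<in> U" "v \<in> U"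
  shows "cmp R W' v = cmp R U v"
proof
  show "cmp R U v \<subseteq> cmp R W' v"
    unfolding cmp_def using rtrancl_mono[of "rel_on R U" "rel_on R W'"] assms(1)
    unfolding rel_on_def by auto
next
  have "(v,y) \<in> (rel_on R W')\<^sup>* \<Longrightarrow> y \<in> U \<and> (v,y) \<in> (rel_on R U)\<^sup>*" for y
  proof (induction rule: rtrancl_induct)
    case base then show ?case using assms(4) by simp
  next
    case (step y z)
    then have "z \<in> U" using assms(2,3) unfolding rel_on_def by auto
    then have "(y,z) \<in> rel_on R U" using step unfolding rel_on_def by auto
    then show ?case using step \<open>z \<in> U\<close> by (meson rtrancl_into_rtrancl)
  qed
  then show "cmp R W' v \<subseteq> cmp R U v" unfolding cmp_def by auto
qed

lemma cmps_disj: assumes s: "symR R" and "C \<in> cmps R W" "D \<in> cmps R W" "C \<noteq> D" shows "C \<inter> D = {}"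
proof (rule ccontr)
  assume "C \<inter> D \<noteq> {}"
  then obtain x where x: "x \<in> C" "x \<in> D" by blast
  obtain c d where cd: "C = cmp R W c" "D = cmp R W d" using assms unfolding cmps_def by blast
  have "x \<in> cmp R W c" "x \<in> cmp R W d" using x cd by auto
  then have "cmp R W x = cmp R W c" "cmp R W x = cmp R W d" using cmp_eq[OF s] by blast+
  then have "C = D" using cd by argo
  then show False using assms(4) by blast
qed

lemma cmps_Union: "\<Union>(cmps R W) = W"
proof
  show "\<Union>(cmps R W) \<subseteq> W" unfolding cmps_def using cmp_sub by fastforce
  show "W \<subseteq> \<Union>(cmps R W)" unfolding cmps_def using cmp_self by fastforce
qed

lemma cmps_ne: "C \<in> cmps R W \<Longrightarrow> C \<noteq> {}"
  unfolding cmps_def using cmp_self by (metis empty_iff imageE)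

lemma cmps_sub: "C \<in> cmps R W \<Longrightarrow> C \<subseteq> W"
  unfolding cmps_def using cmp_sub by fastforce

lemma cmps_finite: "finite W \<Longrightarrow> finite (cmps R W)"
  unfolding cmps_def by simp

lemma cmps_of: assumes s: "symR R" and C: "C \<in> cmps R W" and v: "v \<in> C" shows "cmp R W v = C"
proof -
  obtain w where w: "C = cmp R W w" using C unfolding cmps_def by blast
  show ?thesis using cmp_eq[OF s, of v W w] v w by simp
qed

lemma cmps_closed: "symR R \<Longrightarrow> C \<in> cmps R W \<Longrightarrow> a \<in> C \<Longrightarrow> b \<in> W \<Longrightarrow> R a b \<Longrightarrow> b \<in> C"
proof -
  assume a: "symR R" "C \<in> cmps R W" "a \<in> C" "b \<in> W" "R a b"
  have "a \<in> W" using a cmps_sub by blast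
  then have "cmp R W b = cmp R W a" using cmp_adj[OF a(1) _ a(4) a(5)] by simp
  moreover have "b \<in> cmp R W b" by (rule cmp_self)
  ultimately show "b \<in> C" using cmps_of[OF a(1,2,3)] by simp
qed

lemma card_partition:
  assumes "symR R" "finite W"
  shows "card W = (\<Sum>C\<in>cmps R W. card C)"
proof -
  have "card (\<Union>(cmps R W)) = (\<Sum>C\<in>cmps R W. card C)"
  proof (rule card_Union_disjoint)
    show "pairwise disjnt (cmps R W)"
      unfolding pairwise_def disjnt_def using cmps_disj[OF assms(1)] by blast
    show "\<And>C. C \<in> cmps R W \<Longrightarrow> finite C" using assms(2) cmps_sub by (meson finite_subset)
  qed
  then show ?thesis by (simp add: cmps_Union)
qed

lemma even_sum_odd: "finite X \<Longrightarrow> even (sum f X + card {x\<in>X. odd (f x :: nat)})"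
proof (induction X rule: finite_induct)
  case empty then show ?case by simp
next
  case (insert x F)
  have "{y \<in> insert x F. odd (f y)} = (if odd (f x) then insert x {y\<in>F. odd (f y)} else {y\<in>F. odd (f y)})"
    by auto
  then show ?case using insert by (cases "odd (f x)") (simp_all add: card_insert_if)
qed

lemma oddc_parity:
  assumes "symR R" "finite W"
  shows "even (oddc R W + card W)"
  using even_sum_odd[OF cmps_finite[OF assms(2)], of card] card_partition[OF assms]
  unfolding oddc_def by (simp add: add.commute)

lemma cmps_split:
  assumes sy: "symR R" and C: "C \<in> cmps R W" and Y: "Y \<subseteq> C"
  shows "cmps R (W - Y) = (cmps R W - {C}) \<union> cmps R (C - Y)"
proof -
  have CW: "C \<subseteq> W" using cmps_sub C by blast
  have cl1: "\<forall>a\<in>W - C. \<forall>b\<in>W. R a b \<longrightarrow> b \<in> W - C"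
    using cmps_closed[OF sy C] sy unfolding symR_def by blast
  have cl2: "\<forall>a\<in>C - Y. \<forall>b\<in>W - Y. R a b \<longrightarrow> b \<in> C - Y"
    using cmps_closed[OF sy C] by blast
  have e1: "cmp R (W - Y) v = cmp R W v" if "v \<in> W - C" for v
    using cmp_local[of "W - C" "W - Y" W R v] cmp_local[of "W - C" W W R v] cl1 that Y by auto
  have e2: "cmp R (W - Y) v = cmp R (C - Y) v" if "v \<in> C - Y" for v
    using cmp_local[of "C - Y" "W - Y" "W - Y" R v] cl2 that CW by auto
  have A: "cmps R W - {C} = cmp R W ` (W - C)"
  proof
    show "cmps R W - {C} \<subseteq> cmp R W ` (W - C)"
    proof
      fix D assume "D \<in> cmps R W - {C}"
      then obtain w where w: "w \<in> W" "D = cmp R W w" "D \<noteq> C" unfolding cmps_def by auto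
      have "w \<notin> C" using cmps_of[OF sy C] w by metis
      then show "D \<in> cmp R W ` (W - C)" using w by auto
    qed
  next
    show "cmp R W ` (W - C) \<subseteq> cmps R W - {C}"
    proof
      fix D assume "D \<in> cmp R W ` (W - C)"
      then obtain w where w: "w \<in> W" "w \<notin> C" "D = cmp R W w" by blast
      have "w \<in> D" using w cmp_self by metis
      then show "D \<in> cmps R W - {C}" using w unfolding cmps_def by blast
    qed
  qed
  have "W - Y = (W - C) \<union> (C - Y)" using CW Y by blast
  then have "cmps R (W - Y) = cmp R (W - Y) ` (W - C) \<union> cmp R (W - Y) ` (C - Y)"
    unfolding cmps_def by auto
  also have "\<dots> = cmp R W ` (W - C) \<union> cmp R (C - Y) ` (C - Y)"
    using e1 e2 by (metis (no_types, lifting) image_cong)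
  finally show ?thesis using A unfolding cmps_def by simp
qed

lemma oddc_split:
  assumes sy: "symR R" and fin: "finite W" and C: "C \<in> cmps R W" and Y: "Y \<subseteq> C"
  shows "oddc R (W - Y) + (if odd (card C) then 1 else 0) = oddc R W + oddc R (C - Y)"
proof -
  let ?P = "cmps R W - {C}" and ?Q = "cmps R (C - Y)"
  have CW: "C \<subseteq> W" using cmps_sub[OF C] .
  have disj: "?P \<inter> ?Q = {}"
  proof (rule ccontr)
    assume "?P \<inter> ?Q \<noteq> {}"
    then obtain D where D: "D \<in> ?P" "D \<in> ?Q" by blast
    have D1: "D \<in> cmps R W" "D \<noteq> C" using D(1) by auto
    have "D \<inter> C = {}" using cmps_disj[OF sy D1(1) C D1(2)] .
    moreover have "D \<subseteq> C" using cmps_sub[OF D(2)] by blast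
    moreover have "D \<noteq> {}" using cmps_ne[OF D(2)] .
    ultimately show False by blast
  qed
  have finP: "finite ?P" using cmps_finite[OF fin] by simp
  have "finite (C - Y)" using fin CW by (meson finite_Diff finite_subset)
  then have finQ: "finite ?Q" using cmps_finite by blast
  have fP: "finite {D\<in>?P. odd (card D)}" using finP by simp
  have fQ: "finite {D\<in>?Q. odd (card D)}" using finQ by simp
  have dj: "{D\<in>?P. odd (card D)} \<inter> {D\<in>?Q. odd (card D)} = {}" using disj by blast
  have "{D \<in> ?P \<union> ?Q. odd (card D)} = {D\<in>?P. odd (card D)} \<union> {D\<in>?Q. odd (card D)}" by blast
  then have "card {D \<in> ?P \<union> ?Q. odd (card D)} = card {D\<in>?P. odd (card D)} + card {D\<in>?Q. odd (card D)}"
    using card_Un_disjoint[OF fP fQ dj] by simp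
  then have 1: "oddc R (W - Y) = card {D\<in>?P. odd (card D)} + oddc R (C - Y)"
    unfolding oddc_def cmps_split[OF sy C Y] by simp
  show ?thesis
  proof (cases "odd (card C)")
    case True
    have "{D \<in> cmps R W. odd (card D)} = insert C {D\<in>?P. odd (card D)}"
      using C True by auto
    then have "oddc R W = card {D\<in>?P. odd (card D)} + 1"
      unfolding oddc_def using fP by simp
    then show ?thesis using 1 True by simp
  next
    case False
    have "{D \<in> cmps R W. odd (card D)} = {D\<in>?P. odd (card D)}"
      using C False by auto
    then show ?thesis using 1 False unfolding oddc_def by simp
  qed
qed


theorem tutte:
  assumes sy: "symR R"
  shows "finite V \<Longrightarrow> \<forall>S\<subseteq>V. oddc R (V - S) \<le> card S \<Longrightarrow> \<exists>m. pm R V m"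
proof (induction "card V" arbitrary: V rule: less_induct)
  case less
  note fin = less.prems(1) and tc = less.prems(2)
  show ?case
  proof (cases "V = {}")
    case True then show ?thesis by (rule_tac x=id in exI) (simp add: pm_def)
  next
    case Vne: False
    have "oddc R (V - {}) \<le> card {}" using tc[rule_format, of "{}"] by simp
    then have "oddc R V = 0" by simp
    then have evV: "even (card V)" using oddc_parity[OF sy fin] by simp
    obtain v where v: "v \<in> V" using Vne by blast
    have "card V > 0" using fin v by (auto simp: card_gt_0_iff)
    then have "odd (card (V - {v}))" using evV v fin Vne by (simp add: card_Diff_singleton)
    then have "odd (oddc R (V - {v}))" using oddc_parity[OF sy, of "V - {v}"] fin by auto
    moreover have "oddc R (V - {v}) \<le> card {v}" using tc[rule_format, of "{v}"] v by simp
    ultimately have ov: "oddc R (V - {v}) = card {v}" by (simp add: odd_pos le_antisym Suc_leI)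
    define P where "P = (\<lambda>S. S \<subseteq> V \<and> S \<noteq> {} \<and> oddc R (V - S) = card S)"
    have Pv: "P {v}" using ov v unfolding P_def by auto
    have bnd: "\<forall>S. P S \<longrightarrow> card S < card V + 1"
      unfolding P_def using card_mono[OF fin] by (simp add: le_imp_less_Suc)
    have "\<exists>S. P S \<and> (\<forall>S'. P S' \<longrightarrow> card S' \<le> card S)"
      using ex_has_greatest_nat[of P "{v}" card, OF Pv bnd] .
    then obtain S where PS: "P S" and Smax: "\<And>S'. P S' \<Longrightarrow> card S' \<le> card S" by blast
    have SV: "S \<subseteq> V" and Sne: "S \<noteq> {}" and oS: "oddc R (V - S) = card S" using PS unfolding P_def by auto
    have finS: "finite S" using SV fin finite_subset by blast
    define W where "W = V - S"
    define K where "K = cmps R W"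
    have finW: "finite W" unfolding W_def using fin by simp
    have finK: "finite K" unfolding K_def using cmps_finite[OF finW] .
    have KW: "\<And>C. C \<in> K \<Longrightarrow> C \<subseteq> W" unfolding K_def using cmps_sub by blast
    have finC: "\<And>C. C \<in> K \<Longrightarrow> finite C" using KW finW finite_subset by blast
    have WS: "\<And>Y. Y \<subseteq> W \<Longrightarrow> W - Y = V - (S \<union> Y)" unfolding W_def by blast
    have cardSY: "\<And>Y. Y \<subseteq> W \<Longrightarrow> card (S \<union> Y) = card S + card Y"
      using finS finW unfolding W_def by (metis Diff_disjoint card_Un_disjoint disjoint_iff finite_subset subsetD)
    have allodd: "\<forall>C\<in>K. odd (card C)"
    proof (rule ccontr)
      assume "\<not> (\<forall>C\<in>K. odd (card C))"
      then obtain C where C: "C \<in> K" "even (card C)" by blast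
      obtain c where c: "c \<in> C" using cmps_ne C(1) unfolding K_def by blast
      have sp: "oddc R (W - {c}) + (if odd (card C) then 1 else 0) = oddc R W + oddc R (C - {c})"
        using oddc_split[OF sy finW _ , of C "{c}"] C c unfolding K_def by blast
      have "card C > 0" using c finC[OF C(1)] by (auto simp: card_gt_0_iff)
      then have "odd (card (C - {c}))" using C(2) c by (simp add: card_Diff_singleton)
      then have "odd (oddc R (C - {c}))" using oddc_parity[OF sy, of "C - {c}"] finC[OF C(1)] by auto
      then have "oddc R (C - {c}) \<ge> 1" by (simp add: odd_pos Suc_leI)
      then have ge: "oddc R (W - {c}) \<ge> card S + 1" using sp C(2) oS unfolding W_def by simp
      have cW: "{c} \<subseteq> W" using c KW C(1) by blast
      have eq1: "W - {c} = V - (S \<union> {c})" using WS[OF cW] .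
      have eq2: "card (S \<union> {c}) = card S + 1" using cardSY[OF cW] by simp
      have "S \<union> {c} \<subseteq> V" using SV cW unfolding W_def by blast
      then have le: "oddc R (V - (S \<union> {c})) \<le> card (S \<union> {c})" by (rule tc[rule_format])
      have "P (S \<union> {c})" unfolding P_def using ge le eq1 eq2 \<open>S \<union> {c} \<subseteq> V\<close> by simp
      then have "card (S \<union> {c}) \<le> card S" by (rule Smax)
      then show False using eq2 by simp
    qed
    have fc: "\<exists>m. pm R (C - {c}) m" if C: "C \<in> K" and c: "c \<in> C" for C c
    proof -
      have finCc: "finite (C - {c})" using finC[OF C] by simp
      have "card (C - {c}) < card C" using card_Diff1_less[OF finC[OF C] c] .
      also have "card C \<le> card W" using card_mono[OF finW KW[OF C]] .
      also have "card W \<le> card V" unfolding W_def using fin by (simp add: card_mono)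
      finally have lt: "card (C - {c}) < card V" .
      have tcC: "\<forall>T\<subseteq>C - {c}. oddc R (C - {c} - T) \<le> card T"
      proof (intro allI impI)
        fix T assume T: "T \<subseteq> C - {c}"
        show "oddc R (C - {c} - T) \<le> card T"
        proof (rule ccontr)
          assume "\<not> ?thesis"
          then have gt: "oddc R (C - {c} - T) > card T" by simp
          have finT: "finite T" using T finCc finite_subset by blast
          have par: "even (oddc R (C - {c} - T) + card (C - {c} - T))"
            using oddc_parity[OF sy, of "C - {c} - T"] finCc by simp
          have cc: "card (C - {c} - T) + card T + 1 = card C"
          proof -
            have "card (C - {c} - T) = card (C - {c}) - card T" using card_Diff_subset[OF finT T] .
            moreover have "card (C - {c}) = card C - 1" using c by (simp add: card_Diff_singleton)
            moreover have "card T \<le> card (C - {c})" using card_mono[OF finCc T] .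
            moreover have "card C > 0" using c finC[OF C] by (auto simp: card_gt_0_iff)
            ultimately show ?thesis by simp
          qed
          have "oddc R (C - {c} - T) \<noteq> card T + 1"
          proof
            assume "oddc R (C - {c} - T) = card T + 1"
            then have "even (card C)" using par cc by (metis add.commute add.left_commute)
            then show False using allodd C by blast
          qed
          then have ge2: "oddc R (C - {c} - T) \<ge> card T + 2" using gt by simp
          define Y where "Y = insert c T"
          have YC: "Y \<subseteq> C" unfolding Y_def using T c by blast
          have YW: "Y \<subseteq> W" using YC KW[OF C] by blast
          have "c \<notin> T" using T by blast
          then have cY: "card Y = card T + 1" unfolding Y_def using finT by simp
          have CY: "C - Y = C - {c} - T" unfolding Y_def by blast
          have sp: "oddc R (W - Y) + 1 = oddc R W + oddc R (C - Y)"
            using oddc_split[OF sy finW _ YC] C allodd unfolding K_def by simp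
          then have ge: "oddc R (V - (S \<union> Y)) \<ge> card (S \<union> Y)"
            using ge2 CY oS WS[OF YW] cardSY[OF YW] cY unfolding W_def by simp
          have SYV: "S \<union> Y \<subseteq> V" using SV YW unfolding W_def by blast
          then have "oddc R (V - (S \<union> Y)) \<le> card (S \<union> Y)" by (rule tc[rule_format])
          then have "P (S \<union> Y)" unfolding P_def using ge SYV Sne by simp
          then have "card (S \<union> Y) \<le> card S" by (rule Smax)
          then show False using cardSY[OF YW] cY by simp
        qed
      qed
      show ?thesis using less.hyps[OF lt finCc tcC] .
    qed
    define N where "N = (\<lambda>C. {s\<in>S. \<exists>x\<in>C. R x s})"
    have hallc: "\<forall>K'\<subseteq>K. card K' \<le> card (\<Union>(N ` K'))"
    proof (intro allI impI)
      fix K' assume K': "K' \<subseteq> K"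
      define T where "T = \<Union>(N ` K')"
      have TS: "T \<subseteq> S" unfolding T_def N_def by blast
      have sub: "K' \<subseteq> {D \<in> cmps R (V - T). odd (card D)}"
      proof
        fix C assume CK': "C \<in> K'"
        then have CK: "C \<in> K" using K' by blast
        obtain v where vC: "v \<in> C" using cmps_ne CK unfolding K_def by blast
        have CW: "C \<subseteq> W" using KW[OF CK] .
        have cl: "\<forall>a\<in>C. \<forall>b\<in>V - T. R a b \<longrightarrow> b \<in> C"
        proof (intro ballI impI)
          fix a b assume a: "a \<in> C" and b: "b \<in> V - T" and ab: "R a b"
          show "b \<in> C"
          proof (cases "b \<in> S")
            case True
            then have "b \<in> N C" unfolding N_def using a ab by blast
            then have "b \<in> T" unfolding T_def using CK' by blast
            then show ?thesis using b by blast
          next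
            case False
            then have "b \<in> W" using b unfolding W_def by blast
            then show ?thesis using cmps_closed[OF sy _ a _ ab] CK unfolding K_def by blast
          qed
        qed
        have cl2: "\<forall>a\<in>C. \<forall>b\<in>W. R a b \<longrightarrow> b \<in> C"
          using cmps_closed[OF sy] CK unfolding K_def by blast
        have CVT: "C \<subseteq> V - T" using CW TS unfolding W_def by blast
        have "cmp R (V - T) v = cmp R C v" using cmp_local[OF CVT _ cl vC] by simp
        also have "\<dots> = cmp R W v" using cmp_local[OF CW _ cl2 vC] by simp
        also have "\<dots> = C" using cmps_of[OF sy _ vC] CK unfolding K_def by simp
        finally have "C \<in> cmps R (V - T)" unfolding cmps_def using vC CVT by (metis image_eqI subsetD)
        then show "C \<in> {D \<in> cmps R (V - T). odd (card D)}" using allodd CK by blast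
      qed
      have "T \<subseteq> V" using TS SV by blast
      then have "oddc R (V - T) \<le> card T" by (rule tc[rule_format])
      moreover have "card K' \<le> oddc R (V - T)"
      proof -
        have "finite (cmps R (V - T))" using cmps_finite[of "V - T" R] fin by simp
        then have "finite {D \<in> cmps R (V - T). odd (card D)}" by simp
        then show ?thesis unfolding oddc_def using card_mono sub by blast
      qed
      ultimately have "card K' \<le> card T" by linarith
      then show "card K' \<le> card (\<Union>(N ` K'))" unfolding T_def .
    qed
    have finN: "\<forall>C\<in>K. finite (N C)" unfolding N_def using finS by simp
    obtain r where r: "inj_on r K" "\<forall>C\<in>K. r C \<in> N C"
      using hall_sdr[OF finK finN hallc] by blast
    have cK: "card K = card S"
    proof -
      have "{C \<in> cmps R W. odd (card C)} = K" using allodd unfolding K_def by blast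
      then show ?thesis using oS unfolding oddc_def W_def by simp
    qed
    have rKS: "r ` K = S"
    proof (rule card_subset_eq[OF finS])
      show "r ` K \<subseteq> S" using r(2) unfolding N_def by blast
      show "card (r ` K) = card S" using card_image[OF r(1)] cK by simp
    qed
    have rN: "\<exists>x. x \<in> C \<and> R x (r C)" if "C \<in> K" for C using r(2) that unfolding N_def by blast
    define xf where "xf = (\<lambda>C. SOME x. x \<in> C \<and> R x (r C))"
    have xf: "xf C \<in> C \<and> R (xf C) (r C)" if "C \<in> K" for C
      unfolding xf_def using someI_ex[OF rN[OF that]] .
    define mm where "mm = (\<lambda>C. SOME m. pm R (C - {xf C}) m)"
    have mm: "pm R (C - {xf C}) (mm C)" if "C \<in> K" for C
      unfolding mm_def using someI_ex[OF fc[OF that conjunct1[OF xf[OF that]]]] .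
    define ri where "ri = the_inv_into K r"
    define m where "m = (\<lambda>v. if v \<in> S then xf (ri v)
        else if v = xf (cmp R W v) then r (cmp R W v) else mm (cmp R W v) v)"
    have riK: "ri s \<in> K" and rri: "r (ri s) = s" if "s \<in> S" for s
      using the_inv_into_into[OF r(1), of s K] f_the_inv_into_f[OF r(1), of s] that rKS
      unfolding ri_def by auto
    have rir: "ri (r C) = C" if "C \<in> K" for C
      unfolding ri_def using the_inv_into_f_f[OF r(1) that] .
    have cmpK: "cmp R W v \<in> K" if "v \<in> W" for v unfolding K_def cmps_def using that by blast
    have cmpC: "cmp R W v = C" if "C \<in> K" "v \<in> C" for v C
      using cmps_of[OF sy _ that(2)] that(1) unfolding K_def by blast
    have SW: "S \<inter> W = {}" unfolding W_def by blast
    have "pm R V m" unfolding pm_def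
    proof (intro ballI)
      fix u assume uV: "u \<in> V"
      show "m u \<in> V \<and> m u \<noteq> u \<and> m (m u) = u \<and> R u (m u)"
      proof (cases "u \<in> S")
        case True
        let ?C = "ri u"
        have CK: "?C \<in> K" using riK[OF True] .
        have x1: "xf ?C \<in> C" "R (xf ?C) u" if "C = ?C" for C using xf[OF CK] rri[OF True] that by auto
        have xW: "xf ?C \<in> W" using x1(1)[OF refl] KW[OF CK] by blast
        have mu: "m u = xf ?C" unfolding m_def using True by simp
        have xnS: "xf ?C \<notin> S" using xW SW by blast
        have cx: "cmp R W (xf ?C) = ?C" using cmpC[OF CK x1(1)[OF refl]] .
        have "m (m u) = u" unfolding mu unfolding m_def using xnS cx rri[OF True] by simp
        moreover have "R u (xf ?C)" using x1(2)[OF refl] sy unfolding symR_def by blast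
        then have "R u (m u)" using mu by simp
        moreover have "xf ?C \<in> V" using xW unfolding W_def by blast
        then have "m u \<in> V" using mu by simp
        moreover have "xf ?C \<noteq> u" using xnS True by auto
        then have "m u \<noteq> u" using mu by simp
        ultimately show ?thesis by blast
      next
        case False
        then have uW: "u \<in> W" using uV unfolding W_def by blast
        define C where "C = cmp R W u"
        have CK: "C \<in> K" unfolding C_def using cmpK[OF uW] .
        have mgen: "m u = (if u = xf C then r C else mm C u)" unfolding m_def C_def using False by simp
        show ?thesis
        proof (cases "u = xf C")
          case True
          have mu: "m u = r C" using mgen True by simp
          have rS: "r C \<in> S" using rKS CK by blast
          have "m (r C) = xf (ri (r C))" unfolding m_def using rS by simp
          then have "m (m u) = u" using mu rir[OF CK] True by simp
          moreover have "R (xf C) (r C)" using xf[OF CK] by simp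
          then have "R u (m u)" using mu True by simp
          moreover have "m u \<in> V" using rS SV mu by auto
          moreover have "r C \<noteq> u" using rS False by auto
          then have "m u \<noteq> u" using mu by simp
          ultimately show ?thesis by blast
        next
          case ne: False
          have mu: "m u = mm C u" using mgen ne by simp
          have uC: "u \<in> C - {xf C}" using ne cmp_self[of u R W] unfolding C_def by blast
          have pmC: "mm C u \<in> C - {xf C}" "mm C u \<noteq> u" "mm C (mm C u) = u" "R u (mm C u)"
            using mm[OF CK] uC unfolding pm_def by blast+
          have wW: "mm C u \<in> W" using pmC(1) KW[OF CK] by blast
          have wS: "mm C u \<notin> S" using wW SW by blast
          have cw: "cmp R W (mm C u) = C" using cmpC[OF CK] pmC(1) by blast
          have "m (m u) = u" unfolding mu unfolding m_def using wS cw pmC(1,3) by simp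
          moreover have "m u \<in> V" using mu wW unfolding W_def by simp
          ultimately show ?thesis using mu pmC(2,4) by simp
        qed
      qed
    qed
    then show ?thesis by blast
  qed
qed


definition adjG :: "('v,'e) mgraph \<Rightarrow> 'v \<Rightarrow> 'v \<Rightarrow> bool" where
  "adjG G u v \<longleftrightarrow> (\<exists>e\<in>edges G. endpts G e = {u,v})"
definition cutE :: "('v,'e) mgraph \<Rightarrow> 'e set \<Rightarrow> 'v set \<Rightarrow> 'e set" where
  "cutE G F X = {e\<in>F. card (endpts G e \<inter> X) = 1}"
definition inE :: "('v,'e) mgraph \<Rightarrow> 'e set \<Rightarrow> 'v set \<Rightarrow> 'e set" where
  "inE G F X = {e\<in>F. card (endpts G e \<inter> X) = 2}"
definition incE :: "('v,'e) mgraph \<Rightarrow> 'v set \<Rightarrow> 'e set" where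
  "incE G X = {e\<in>edges G. endpts G e \<inter> X \<noteq> {}}"

lemma symR_adjG: "symR (adjG G)"
  unfolding symR_def adjG_def by (auto simp: insert_commute)

lemma components_cmps: "components G S = cmps (adjG G) (verts G - S)"
  unfolding components_def cmps_def comp_of_def cmp_def adj_minus_def rel_on_def adjG_def by simp

lemma comp_of_cmp: "comp_of G S v = cmp (adjG G) (verts G - S) v"
  unfolding comp_of_def cmp_def adj_minus_def rel_on_def adjG_def by simp

lemma deg_insert:
  "e \<notin> F \<Longrightarrow> finite F \<Longrightarrow> deg_in (insert e F) G v = deg_in F G v + (if v \<in> endpts G e then 1 else 0)"
proof -
  assume a: "e \<notin> F" "finite F"
  have "{x\<in>insert e F. v \<in> endpts G x} = (if v \<in> endpts G e then insert e {x\<in>F. v \<in> endpts G x} else {x\<in>F. v \<in> endpts G x})"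
    by auto
  then show ?thesis unfolding deg_in_def using a by simp
qed

lemma sum_ind: "finite X \<Longrightarrow> (\<Sum>v\<in>X. (if v \<in> P then 1 else 0::nat)) = card (X \<inter> P)"
  by (simp add: sum.If_cases Int_def)

lemma sum_deg_edges:
  assumes "finite F" "finite X"
  shows "(\<Sum>v\<in>X. deg_in F G v) = (\<Sum>e\<in>F. card (endpts G e \<inter> X))"
  using assms(1)
proof (induction F rule: finite_induct)
  case empty then show ?case unfolding deg_in_def by simp
next
  case (insert e F)
  have "(\<Sum>v\<in>X. deg_in (insert e F) G v) = (\<Sum>v\<in>X. deg_in F G v) + (\<Sum>v\<in>X. (if v \<in> endpts G e then 1 else 0))"
  proof -
    have "(\<Sum>v\<in>X. deg_in (insert e F) G v) = (\<Sum>v\<in>X. deg_in F G v + (if v \<in> endpts G e then 1 else 0))"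
      by (intro sum.cong refl) (rule deg_insert[OF insert(2,1)])
    then show ?thesis by (simp add: sum.distrib)
  qed
  also have "(\<Sum>v\<in>X. (if v \<in> endpts G e then 1 else 0)) = card (endpts G e \<inter> X)"
    using sum_ind[OF assms(2)] by (simp add: Int_commute)
  finally show ?case using insert by simp
qed

lemma sum_card_split:
  assumes "finite F" "\<forall>e\<in>F. card (endpts G e \<inter> X) \<le> 2"
  shows "(\<Sum>e\<in>F. card (endpts G e \<inter> X)) = card (cutE G F X) + 2 * card (inE G F X)"
  using assms
proof (induction F rule: finite_induct)
  case empty then show ?case unfolding cutE_def inE_def by simp
next
  case (insert e F)
  have IH: "(\<Sum>e\<in>F. card (endpts G e \<inter> X)) = card (cutE G F X) + 2 * card (inE G F X)"
    using insert by simp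
  have c: "cutE G (insert e F) X = (if card (endpts G e \<inter> X) = 1 then insert e (cutE G F X) else cutE G F X)"
    unfolding cutE_def by auto
  have i: "inE G (insert e F) X = (if card (endpts G e \<inter> X) = 2 then insert e (inE G F X) else inE G F X)"
    unfolding inE_def by auto
  have fc: "finite (cutE G F X)" "finite (inE G F X)" unfolding cutE_def inE_def using insert(1) by simp_all
  have nc: "e \<notin> cutE G F X" "e \<notin> inE G F X" unfolding cutE_def inE_def using insert(2) by simp_all
  have "card (endpts G e \<inter> X) \<le> 2" using insert(4) by simp
  then have "card (endpts G e \<inter> X) = 0 \<or> card (endpts G e \<inter> X) = 1 \<or> card (endpts G e \<inter> X) = 2" by linarith
  then show ?case using IH c i fc nc insert(1,2) by auto
qed

lemma double_count:
  assumes "mgraph G" "F \<subseteq> edges G" "finite X"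
  shows "(\<Sum>v\<in>X. deg_in F G v) = card (cutE G F X) + 2 * card (inE G F X)"
proof -
  have finF: "finite F" using assms(1,2) unfolding mgraph_def using finite_subset by blast
  have "\<forall>e\<in>F. card (endpts G e \<inter> X) \<le> 2"
  proof
    fix e assume "e \<in> F"
    then have "card (endpts G e) = 2" using assms unfolding mgraph_def by blast
    moreover have "finite (endpts G e)" using \<open>card (endpts G e) = 2\<close> card_ge_0_finite[of "endpts G e"] by simp
    ultimately show "card (endpts G e \<inter> X) \<le> 2" by (metis Int_lower1 card_mono)
  qed
  then show ?thesis using sum_deg_edges[OF finF assms(3)] sum_card_split[OF finF] by simp
qed

lemma ep2:
  assumes "mgraph G" "e \<in> edges G"
  shows "\<exists>p q. p \<noteq> q \<and> endpts G e = {p,q} \<and> p \<in> verts G \<and> q \<in> verts G"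
proof -
  have "card (endpts G e) = 2" "endpts G e \<subseteq> verts G" using assms unfolding mgraph_def by auto
  then show ?thesis by (metis card_2_iff insert_subset)
qed

lemma card_int1:
  assumes "p \<noteq> q"
  shows "card ({p,q} \<inter> X) = 1 \<longleftrightarrow> (p \<in> X \<and> q \<notin> X) \<or> (q \<in> X \<and> p \<notin> X)"
  using assms by (cases "p \<in> X"; cases "q \<in> X") (auto simp: Int_insert_left)

lemma card_int2:
  assumes "p \<noteq> q"
  shows "card ({p,q} \<inter> X) = 2 \<longleftrightarrow> p \<in> X \<and> q \<in> X"
  using assms by (cases "p \<in> X"; cases "q \<in> X") (auto simp: Int_insert_left)


locale cg0 =
  fixes G :: "('v,'e) mgraph"
  assumes cub: "cubic G" and con: "k_connected 3 G"
begin

lemma mg: "mgraph G" using cub unfolding cubic_def by blast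
lemma finV: "finite (verts G)" using mg unfolding mgraph_def by blast
lemma finE: "finite (edges G)" using mg unfolding mgraph_def by blast
lemma deg3: "v \<in> verts G \<Longrightarrow> deg_in (edges G) G v = 3" using cub unfolding cubic_def by blast

lemma sum3: "X \<subseteq> verts G \<Longrightarrow> 3 * card X = card (cutE G (edges G) X) + 2 * card (inE G (edges G) X)"
proof -
  assume X: "X \<subseteq> verts G"
  have fX: "finite X" using X finV finite_subset by blast
  have "(\<Sum>v\<in>X. deg_in (edges G) G v) = 3 * card X" using deg3 X by (simp add: subset_iff)
  then show ?thesis using double_count[OF mg subset_refl fX] by simp
qed

lemma cut_odd: "X \<subseteq> verts G \<Longrightarrow> odd (card X) \<Longrightarrow> odd (card (cutE G (edges G) X))"
  using sum3 by (metis even_add even_mult_iff odd_numeral dvd_triv_left)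

lemma two_comps:
  assumes S: "S \<subseteq> verts G" "card S < 3" and X: "X \<subseteq> verts G - S"
    and cl: "\<forall>a\<in>X. \<forall>y\<in>verts G - S. adjG G a y \<longrightarrow> y \<in> X"
    and x: "x \<in> X" and w: "w \<in> verts G - S" "w \<notin> X"
  shows False
proof -
  have c1: "card (components G S) = 1" using con S unfolding k_connected_def by blast
  let ?R = "adjG G" and ?W = "verts G - S"
  have "cmp ?R ?W x = cmp ?R X x" using cmp_local[OF X subset_refl cl x] .
  then have "cmp ?R ?W x \<subseteq> X" using cmp_sub[OF x] by simp
  moreover have "w \<in> cmp ?R ?W w" by (rule cmp_self)
  ultimately have ne: "cmp ?R ?W x \<noteq> cmp ?R ?W w" using w by blast
  have "cmp ?R ?W x \<in> components G S" "cmp ?R ?W w \<in> components G S"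
    unfolding components_cmps cmps_def using x X w by auto
  then show False using c1 ne by (metis card_1_singletonE singletonD)
qed

lemma cut_ne:
  assumes D: "D \<subseteq> verts G" "D \<noteq> {}" "verts G - D \<noteq> {}"
  shows "cutE G (edges G) D \<noteq> {}"
proof
  assume cut0: "cutE G (edges G) D = {}"
  obtain x where x: "x \<in> D" using D by blast
  obtain w where w: "w \<in> verts G - D" using D by blast
  have cl: "\<forall>a\<in>D. \<forall>y\<in>verts G - {}. adjG G a y \<longrightarrow> y \<in> D"
  proof (intro ballI impI)
    fix a y assume a: "a \<in> D" and y: "y \<in> verts G - {}" and ay: "adjG G a y"
    then obtain e where e: "e \<in> edges G" "endpts G e = {a,y}" unfolding adjG_def by blast
    show "y \<in> D"
    proof (rule ccontr)
      assume "y \<notin> D"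
      then have "a \<noteq> y" using a by blast
      then have "card (endpts G e \<inter> D) = 1" using e(2) a \<open>y \<notin> D\<close> card_int1 by metis
      then have "e \<in> cutE G (edges G) D" unfolding cutE_def using e by blast
      then show False using cut0 by blast
    qed
  qed
  show False using two_comps[of "{}" D x w] cl D x w by simp
qed

lemma cut_ge3:
  assumes D: "D \<subseteq> verts G" "D \<noteq> {}" "verts G - D \<noteq> {}" and od: "odd (card D)"
  shows "card (cutE G (edges G) D) \<ge> 3"
proof (rule ccontr)
  assume "\<not> ?thesis"
  moreover have "odd (card (cutE G (edges G) D))" using cut_odd[OF D(1) od] .
  ultimately have c1: "card (cutE G (edges G) D) = 1"
    by presburger
  then obtain e0 where e0: "cutE G (edges G) D = {e0}" by (meson card_1_singletonE)
  then have e0E: "e0 \<in> edges G" and ce0: "card (endpts G e0 \<inter> D) = 1" unfolding cutE_def by auto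
  obtain p q where pq: "p \<noteq> q" "endpts G e0 = {p,q}" "p \<in> verts G" "q \<in> verts G" using ep2[OF mg e0E] by blast
  obtain a0 b0 where ab: "endpts G e0 = {a0,b0}" "a0 \<in> D" "b0 \<notin> D"
    using ce0 pq card_int1 by (metis insert_commute)
  show False
  proof (cases "D = {a0}")
    case True
    have "cutE G (edges G) D = {e\<in>edges G. a0 \<in> endpts G e}"
      unfolding cutE_def True by (simp add: Int_insert_right) blast
    moreover have "a0 \<in> verts G" using ab(2) D(1) by blast
    ultimately have "card (cutE G (edges G) D) = 3" using deg3 unfolding deg_in_def by simp
    then show False using c1 by simp
  next
    case False
    then obtain x where x: "x \<in> D - {a0}" using D(2) by blast
    obtain w where w: "w \<in> verts G - D" using D by blast
    have cl: "\<forall>a\<in>D - {a0}. \<forall>y\<in>verts G - {a0}. adjG G a y \<longrightarrow> y \<in> D - {a0}"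
    proof (intro ballI impI)
      fix a y assume a: "a \<in> D - {a0}" and y: "y \<in> verts G - {a0}" and ay: "adjG G a y"
      then obtain e where e: "e \<in> edges G" "endpts G e = {a,y}" unfolding adjG_def by blast
      show "y \<in> D - {a0}"
      proof (rule ccontr)
        assume "y \<notin> D - {a0}"
        then have yD: "y \<notin> D" using y by blast
        then have "a \<noteq> y" using a by blast
        then have "card (endpts G e \<inter> D) = 1" using e(2) a yD card_int1 by (metis DiffD1)
        then have "e \<in> cutE G (edges G) D" unfolding cutE_def using e by blast
        then have "e = e0" using e0 by blast
        then have "{a,y} = {a0,b0}" using e(2) ab(1) by simp
        then have "a = a0 \<or> a = b0" by (metis doubleton_eq_iff)
        then show False using a ab(3) by blast
      qed
    qed
    have "card {a0} < 3" by simp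
    moreover have "{a0} \<subseteq> verts G" using ab(2) D(1) by blast
    moreover have "D - {a0} \<subseteq> verts G - {a0}" using D(1) by blast
    moreover have "w \<in> verts G - {a0}" "w \<notin> D - {a0}" using w ab(2) by auto
    ultimately show False using two_comps[of "{a0}" "D - {a0}" x w] cl x by blast
  qed
qed

end


lemma sum_all3:
  fixes f :: "'a \<Rightarrow> nat"
  assumes "finite X" "\<forall>x\<in>X. f x \<ge> k" "sum f X \<le> k * card X"
  shows "\<forall>x\<in>X. f x = k"
proof (rule ccontr)
  assume "\<not> ?thesis"
  then obtain a where a: "a \<in> X" "f a > k" using assms(2) by (metis le_neq_implies_less)
  have "sum (\<lambda>_. k) X < sum f X"
    using sum_strict_mono_ex1[OF assms(1), of "\<lambda>_. k" f] assms(2) a by blast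
  then show False using assms(3) by (simp add: mult.commute)
qed

locale cg = cg0 +
  fixes B :: "'v set" and b :: 'v
  assumes bar: "barrier G B" and Bne: "B \<noteq> {}" and bB: "b \<in> B"
begin

abbreviation "AA \<equiv> components G B"

lemma BV: "B \<subseteq> verts G" using bar unfolding barrier_def by blast
lemma finB: "finite B" using BV finV finite_subset by blast

lemma A_cmps: "AA = cmps (adjG G) (verts G - B)" by (rule components_cmps)

lemma A_sub: "C \<in> AA \<Longrightarrow> C \<subseteq> verts G - B" unfolding A_cmps using cmps_sub by blast
lemma A_ne: "C \<in> AA \<Longrightarrow> C \<noteq> {}" unfolding A_cmps using cmps_ne by blast
lemma A_fin: "finite AA" unfolding A_cmps using cmps_finite finV by blast
lemma C_fin: assumes "C \<in> AA" shows "finite C"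
proof -
  have "C \<subseteq> verts G" using A_sub[OF assms] by blast
  then show ?thesis using finite_subset finV by blast
qed

lemma A_of: "C \<in> AA \<Longrightarrow> v \<in> C \<Longrightarrow> comp_of G B v = C"
  unfolding comp_of_cmp A_cmps by (rule cmps_of[OF symR_adjG])

lemma A_in: "v \<in> verts G - B \<Longrightarrow> comp_of G B v \<in> AA"
  unfolding comp_of_cmp A_cmps cmps_def by (rule imageI)

lemma A_self: "v \<in> comp_of G B v"
  unfolding comp_of_cmp by (rule cmp_self)

lemma A_disj: "C \<in> AA \<Longrightarrow> D \<in> AA \<Longrightarrow> C \<noteq> D \<Longrightarrow> C \<inter> D = {}"
  unfolding A_cmps by (rule cmps_disj[OF symR_adjG])

lemma A_closed: "C \<in> AA \<Longrightarrow> a \<in> C \<Longrightarrow> y \<in> verts G \<Longrightarrow> adjG G a y \<Longrightarrow> y \<notin> C \<Longrightarrow> y \<in> B"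
proof (rule ccontr)
  assume a: "C \<in> AA" "a \<in> C" "y \<in> verts G" "adjG G a y" "y \<notin> C" "y \<notin> B"
  then have "y \<in> C" using cmps_closed[OF symR_adjG[of G], of C "verts G - B" a y] unfolding A_cmps by blast
  then show False using a by blast
qed

lemma cutC:
  assumes C: "C \<in> AA" and e: "e \<in> cutE G (edges G) C"
  shows "\<exists>p q. endpts G e = {p,q} \<and> p \<in> C \<and> q \<in> B"
proof -
  have eE: "e \<in> edges G" and c1: "card (endpts G e \<inter> C) = 1" using e unfolding cutE_def by auto
  obtain p q where pq: "p \<noteq> q" "endpts G e = {p,q}" "p \<in> verts G" "q \<in> verts G" using ep2[OF mg eE] by blast
  have "(p \<in> C \<and> q \<notin> C) \<or> (q \<in> C \<and> p \<notin> C)" using c1 pq card_int1 by metis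
  then show ?thesis
  proof
    assume h: "p \<in> C \<and> q \<notin> C"
    have "adjG G p q" unfolding adjG_def using eE pq by blast
    then have "q \<in> B" using A_closed[OF C _ pq(4)] h by blast
    then show ?thesis using pq h by blast
  next
    assume h: "q \<in> C \<and> p \<notin> C"
    have "adjG G q p" unfolding adjG_def using eE pq by (metis insert_commute)
    then have "p \<in> B" using A_closed[OF C _ pq(3)] h by blast
    then show ?thesis using pq h by (metis insert_commute)
  qed
qed

lemma cutF: "cutE G F X = F \<inter> cutE G (edges G) X" if "F \<subseteq> edges G"
  using that unfolding cutE_def by blast

lemma cut_subB: "C \<in> AA \<Longrightarrow> cutE G (edges G) C \<subseteq> cutE G (edges G) B"
proof
  fix e assume C: "C \<in> AA" and e: "e \<in> cutE G (edges G) C"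
  obtain p q where pq: "endpts G e = {p,q}" "p \<in> C" "q \<in> B" using cutC[OF C e] by blast
  have "p \<notin> B" using A_sub[OF C] pq by blast
  then have "p \<noteq> q" using pq by blast
  then have "card (endpts G e \<inter> B) = 1" using pq \<open>p \<notin> B\<close> card_int1 by metis
  then show "e \<in> cutE G (edges G) B" using e unfolding cutE_def by blast
qed

lemma cut_disj:
  assumes "C \<in> AA" "D \<in> AA" "C \<noteq> D"
  shows "cutE G (edges G) C \<inter> cutE G (edges G) D = {}"
proof (rule ccontr)
  assume "\<not> ?thesis"
  then obtain e where e: "e \<in> cutE G (edges G) C" "e \<in> cutE G (edges G) D" by blast
  obtain p q where pq: "endpts G e = {p,q}" "p \<in> C" "q \<in> B" using cutC[OF assms(1) e(1)] by blast
  obtain p' q' where pq': "endpts G e = {p',q'}" "p' \<in> D" "q' \<in> B" using cutC[OF assms(2) e(2)] by blast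
  have "p \<notin> B" "p' \<notin> B" using A_sub assms pq pq' by blast+
  then have "p = p'" using pq pq' by (metis doubleton_eq_iff)
  then show False using A_disj[OF assms] pq pq' by blast
qed

lemma cutB_union: "cutE G (edges G) B = (\<Union>C\<in>AA. cutE G (edges G) C)"
proof
  show "(\<Union>C\<in>AA. cutE G (edges G) C) \<subseteq> cutE G (edges G) B" using cut_subB by blast
next
  show "cutE G (edges G) B \<subseteq> (\<Union>C\<in>AA. cutE G (edges G) C)"
  proof
    fix e assume e: "e \<in> cutE G (edges G) B"
    then have eE: "e \<in> edges G" and c1: "card (endpts G e \<inter> B) = 1" unfolding cutE_def by auto
    obtain p q where pq: "p \<noteq> q" "endpts G e = {p,q}" "p \<in> verts G" "q \<in> verts G" using ep2[OF mg eE] by blast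
    obtain x y where xy: "endpts G e = {x,y}" "x \<in> B" "y \<notin> B" "y \<in> verts G"
      using c1 pq card_int1 by (metis insert_commute)
    define C where "C = comp_of G B y"
    have CA: "C \<in> AA" unfolding C_def using A_in xy by blast
    have yC: "y \<in> C" unfolding C_def by (rule A_self)
    have xC: "x \<notin> C" using A_sub[OF CA] xy by blast
    have "x \<noteq> y" using xy by blast
    then have "card (endpts G e \<inter> C) = 1" using xy yC xC card_int1 by metis
    then show "e \<in> (\<Union>C\<in>AA. cutE G (edges G) C)" using CA eE unfolding cutE_def by blast
  qed
qed

lemma sum_cuts: "(\<Sum>C\<in>AA. card (cutE G (edges G) C)) = card (cutE G (edges G) B)"
proof -
  have "card (\<Union>C\<in>AA. cutE G (edges G) C) = (\<Sum>C\<in>AA. card (cutE G (edges G) C))"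
  proof (rule card_UN_disjoint[OF A_fin])
    show "\<forall>C\<in>AA. finite (cutE G (edges G) C)" using finE unfolding cutE_def by simp
    show "\<forall>C\<in>AA. \<forall>D\<in>AA. C \<noteq> D \<longrightarrow> cutE G (edges G) C \<inter> cutE G (edges G) D = {}"
      using cut_disj by blast
  qed
  then show ?thesis using cutB_union by simp
qed

lemma struc:
  shows "\<forall>C\<in>AA. odd (card C)" and "\<forall>C\<in>AA. card (cutE G (edges G) C) = 3"
    and "inE G (edges G) B = {}" and "card AA = card B"
proof -
  define Ao where "Ao = {C\<in>AA. odd (card C)}"
  define Ae where "Ae = AA - Ao"
  have cAo: "card Ao = card B" using bar unfolding barrier_def odd_components_def Ao_def by simp
  have finAo: "finite Ao" "finite Ae" unfolding Ao_def Ae_def using A_fin by auto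
  have AoAe: "AA = Ao \<union> Ae" "Ao \<inter> Ae = {}" unfolding Ae_def Ao_def by auto
  have ge1: "card (cutE G (edges G) C) \<ge> 1" if "C \<in> AA" for C
  proof -
    have "C \<subseteq> verts G" "C \<noteq> {}" using A_sub[OF that] A_ne[OF that] by auto
    moreover have "verts G - C \<noteq> {}" using A_sub[OF that] Bne BV by blast
    ultimately have "cutE G (edges G) C \<noteq> {}" using cut_ne by blast
    moreover have "finite (cutE G (edges G) C)" using finE unfolding cutE_def by simp
    ultimately show ?thesis by (simp add: Suc_leI card_gt_0_iff)
  qed
  have ge3: "card (cutE G (edges G) C) \<ge> 3" if "C \<in> Ao" for C
  proof -
    have CA: "C \<in> AA" and od: "odd (card C)" using that unfolding Ao_def by auto
    have "C \<subseteq> verts G" "C \<noteq> {}" using A_sub[OF CA] A_ne[OF CA] by auto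
    moreover have "verts G - C \<noteq> {}" using A_sub[OF CA] Bne BV by blast
    ultimately show ?thesis using cut_ge3 od by blast
  qed
  have s1: "(\<Sum>C\<in>Ao. card (cutE G (edges G) C)) \<ge> 3 * card Ao"
    using sum_mono[of Ao "\<lambda>_. 3" "\<lambda>C. card (cutE G (edges G) C)"] ge3 by simp
  have s2: "(\<Sum>C\<in>Ae. card (cutE G (edges G) C)) \<ge> card Ae"
    using sum_mono[of Ae "\<lambda>_. 1" "\<lambda>C. card (cutE G (edges G) C)"] ge1 unfolding Ae_def by simp
  have "(\<Sum>C\<in>AA. card (cutE G (edges G) C)) = (\<Sum>C\<in>Ao. card (cutE G (edges G) C)) + (\<Sum>C\<in>Ae. card (cutE G (edges G) C))"
    using AoAe finAo by (simp add: sum.union_disjoint)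
  moreover have "3 * card B = card (cutE G (edges G) B) + 2 * card (inE G (edges G) B)" using sum3[OF BV] .
  ultimately have key: "(\<Sum>C\<in>Ao. card (cutE G (edges G) C)) + (\<Sum>C\<in>Ae. card (cutE G (edges G) C)) + 2 * card (inE G (edges G) B) = 3 * card Ao"
    using sum_cuts cAo by simp
  then have "card Ae = 0" "card (inE G (edges G) B) = 0" using s1 s2 by linarith+
  then have Ae0: "Ae = {}" and in0: "inE G (edges G) B = {}" using finAo finE unfolding inE_def by auto
  show "inE G (edges G) B = {}" using in0 .
  have AAo: "AA = Ao" using AoAe Ae0 by simp
  show "\<forall>C\<in>AA. odd (card C)" using AAo unfolding Ao_def by blast
  show "card AA = card B" using AAo cAo by simp
  have le: "(\<Sum>C\<in>Ao. card (cutE G (edges G) C)) \<le> 3 * card Ao" using key by linarith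
  have "\<forall>C\<in>Ao. card (cutE G (edges G) C) = 3"
  proof (rule sum_all3[OF finAo(1)])
    show "\<forall>C\<in>Ao. 3 \<le> card (cutE G (edges G) C)" using ge3 by blast
    show "(\<Sum>C\<in>Ao. card (cutE G (edges G) C)) \<le> 3 * card Ao" using le .
  qed
  then show "\<forall>C\<in>AA. card (cutE G (edges G) C) = 3" using AAo by simp
qed

end


lemma ep2E:
  assumes "mgraph G" "e \<in> edges G"
  obtains p q where "p \<noteq> q" "endpts G e = {p,q}" "p \<in> verts G" "q \<in> verts G"
  using ep2[OF assms] by blast

context cg
begin

definition phi :: "'v \<Rightarrow> 'v set" where "phi v = (if v \<in> B then {v} else comp_of G B v)"
definition psi :: "'v set \<Rightarrow> 'v \<Rightarrow> 'v set" where "psi J v = (if v \<in> J then {v} else verts G - J)"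

lemma core_parts: "verts (core G B) = phi ` verts G"
  "edges (core G B) = {e\<in>edges G. card (phi ` endpts G e) = 2}"
  "endpts (core G B) = (\<lambda>e. phi ` endpts G e)"
  unfolding core_def contract_def verts_def edges_def endpts_def phi_def[abs_def] by simp_all

lemma frag_parts: "verts (fragment G J) = psi J ` verts G"
  "edges (fragment G J) = {e\<in>edges G. card (psi J ` endpts G e) = 2}"
  "endpts (fragment G J) = (\<lambda>e. psi J ` endpts G e)"
  unfolding fragment_def contract_def verts_def edges_def endpts_def psi_def[abs_def] by simp_all

lemma cutB_ends:
  assumes e: "e \<in> cutE G (edges G) B"
  shows "\<exists>x y. endpts G e = {x,y} \<and> x \<in> B \<and> y \<notin> B \<and> y \<in> verts G"
proof -
  have eE: "e \<in> edges G" and c1: "card (endpts G e \<inter> B) = 1" using e unfolding cutE_def by auto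
  obtain p q where pq: "p \<noteq> q" "endpts G e = {p,q}" "p \<in> verts G" "q \<in> verts G" by (rule ep2E[OF mg eE])
  have "(p \<in> B \<and> q \<notin> B) \<or> (q \<in> B \<and> p \<notin> B)" using c1 pq card_int1 by metis
  then show ?thesis using pq by (metis insert_commute)
qed

lemma core_edges_eq: "edges (core G B) = cutE G (edges G) B"
proof
  show "edges (core G B) \<subseteq> cutE G (edges G) B"
  proof
    fix e assume e: "e \<in> edges (core G B)"
    then have eE: "e \<in> edges G" and c2: "card (phi ` endpts G e) = 2" unfolding core_parts by auto
    obtain p q where pq: "p \<noteq> q" "endpts G e = {p,q}" "p \<in> verts G" "q \<in> verts G" by (rule ep2E[OF mg eE])
    have "\<not> (p \<in> B \<and> q \<in> B)"
    proof
      assume "p \<in> B \<and> q \<in> B"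
      then have "card (endpts G e \<inter> B) = 2" using pq card_int2[OF pq(1), of B] by simp
      then have "e \<in> inE G (edges G) B" unfolding inE_def using eE by blast
      then show False using struc(3) by blast
    qed
    moreover have "\<not> (p \<notin> B \<and> q \<notin> B)"
    proof
      assume h: "p \<notin> B \<and> q \<notin> B"
      have "adjG G p q" unfolding adjG_def using eE pq by blast
      then have "comp_of G B p = comp_of G B q" unfolding comp_of_cmp
        using cmp_adj[OF symR_adjG[of G]] h pq by blast
      then have "phi ` endpts G e = {comp_of G B p}" unfolding phi_def using pq h by auto
      then show False using c2 by simp
    qed
    ultimately have "card (endpts G e \<inter> B) = 1" using pq card_int1 by metis
    then show "e \<in> cutE G (edges G) B" unfolding cutE_def using eE by blast
  qed
next
  show "cutE G (edges G) B \<subseteq> edges (core G B)"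
  proof
    fix e assume e: "e \<in> cutE G (edges G) B"
    then have eE: "e \<in> edges G" unfolding cutE_def by auto
    obtain x y where xy: "endpts G e = {x,y}" "x \<in> B" "y \<notin> B" "y \<in> verts G" using cutB_ends[OF e] by blast
    have im: "phi ` endpts G e = {{x}, comp_of G B y}" unfolding phi_def using xy by auto
    have "y \<in> comp_of G B y" by (rule A_self)
    then have "{x} \<noteq> comp_of G B y" using xy by auto
    then have "card (phi ` endpts G e) = 2" unfolding im by simp
    then show "e \<in> edges (core G B)" unfolding core_parts using eE by blast
  qed
qed

lemma deg_core_C:
  assumes F: "F \<subseteq> cutE G (edges G) B" and C: "C \<in> AA"
  shows "deg_in F (core G B) C = card (F \<inter> cutE G (edges G) C)"
proof -
  have "{e\<in>F. C \<in> endpts (core G B) e} = F \<inter> cutE G (edges G) C"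
  proof (intro set_eqI iffI)
    fix e assume "e \<in> {e\<in>F. C \<in> endpts (core G B) e}"
    then have eF: "e \<in> F" and Cin: "C \<in> phi ` endpts G e" unfolding core_parts by auto
    have eB: "e \<in> cutE G (edges G) B" using eF F by blast
    obtain x y where xy: "endpts G e = {x,y}" "x \<in> B" "y \<notin> B" "y \<in> verts G" using cutB_ends[OF eB] by blast
    have im: "phi ` endpts G e = {{x}, comp_of G B y}" unfolding phi_def using xy by auto
    have "C \<noteq> {x}" using A_sub[OF C] xy by blast
    then have "C = comp_of G B y" using Cin im by blast
    then have yC: "y \<in> C" using A_self by metis
    have xC: "x \<notin> C" using A_sub[OF C] xy by blast
    have "x \<noteq> y" using xy by blast
    then have "card (endpts G e \<inter> C) = 1" using xy yC xC card_int1 by metis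
    then show "e \<in> F \<inter> cutE G (edges G) C" using eF eB unfolding cutE_def by blast
  next
    fix e assume e: "e \<in> F \<inter> cutE G (edges G) C"
    obtain p q where pq: "endpts G e = {p,q}" "p \<in> C" "q \<in> B" using cutC[OF C] e by blast
    have "p \<notin> B" "p \<in> verts G" using A_sub[OF C] pq by blast+
    then have "phi p = C" unfolding phi_def using A_of[OF C pq(2)] by simp
    then have "C \<in> phi ` endpts G e" using pq by blast
    then show "e \<in> {e\<in>F. C \<in> endpts (core G B) e}" unfolding core_parts using e by blast
  qed
  then show ?thesis unfolding deg_in_def by simp
qed

lemma deg_core_v:
  assumes F: "F \<subseteq> cutE G (edges G) B" and v: "v \<in> B"
  shows "deg_in F (core G B) {v} = deg_in F G v"
proof -
  have "{e\<in>F. {v} \<in> endpts (core G B) e} = {e\<in>F. v \<in> endpts G e}"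
  proof (intro set_eqI)
    fix e
    show "e \<in> {e\<in>F. {v} \<in> endpts (core G B) e} \<longleftrightarrow> e \<in> {e\<in>F. v \<in> endpts G e}"
    proof (cases "e \<in> F")
      case True
      then have eB: "e \<in> cutE G (edges G) B" using F by blast
      obtain x y where xy: "endpts G e = {x,y}" "x \<in> B" "y \<notin> B" "y \<in> verts G" using cutB_ends[OF eB] by blast
      have im: "phi ` endpts G e = {{x}, comp_of G B y}" unfolding phi_def using xy by auto
      have "y \<in> comp_of G B y" by (rule A_self)
      then have "comp_of G B y \<noteq> {v}" using xy v by auto
      then have "{v} \<in> phi ` endpts G e \<longleftrightarrow> v = x" using im by auto
      also have "\<dots> \<longleftrightarrow> v \<in> endpts G e" using xy v by auto
      finally show ?thesis unfolding core_parts using True by simp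
    next
      case False then show ?thesis by simp
    qed
  qed
  then show ?thesis unfolding deg_in_def by simp
qed

lemma core_verts_cases: "u \<in> verts (core G B) \<Longrightarrow> (\<exists>v\<in>B. u = {v}) \<or> u \<in> AA"
  unfolding core_parts phi_def using A_in by auto

lemma C_core: "C \<in> AA \<Longrightarrow> C \<in> verts (core G B)"
proof -
  assume C: "C \<in> AA"
  obtain v where v: "v \<in> C" using A_ne[OF C] by blast
  have "v \<in> verts G" "v \<notin> B" using A_sub[OF C] v by blast+
  then have "phi v = C" unfolding phi_def using A_of[OF C v] by simp
  then show "C \<in> verts (core G B)" unfolding core_parts using image_eqI[of C phi v "verts G"] \<open>v \<in> verts G\<close> by simp
qed

lemma v_core: assumes v: "v \<in> B" shows "{v} \<in> verts (core G B)"
proof -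
  have "phi v = {v}" "v \<in> verts G" using v BV unfolding phi_def by auto
  then show ?thesis unfolding core_parts using image_eqI[of "{v}" phi v "verts G"] by simp
qed

lemma C_ne_v: assumes "C \<in> AA" "v \<in> B" shows "C \<noteq> {v}"
proof
  assume "C = {v}"
  then have "v \<in> C" by simp
  then show False using A_sub[OF assms(1)] assms(2) by blast
qed

end


context cg
begin

lemma psi_card:
  assumes "p \<noteq> q" "J \<subseteq> verts G"
  shows "card (psi J ` {p,q}) = 2 \<longleftrightarrow> (p \<in> J \<or> q \<in> J)"
proof -
  have ne: "{x} \<noteq> verts G - J" if "x \<in> J" for x using that by blast
  show ?thesis
  proof (cases "p \<in> J"; cases "q \<in> J")
    assume "p \<in> J" "q \<in> J" then show ?thesis using assms(1) unfolding psi_def by simp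
  next
    assume "p \<in> J" "q \<notin> J" then show ?thesis using ne[of p] unfolding psi_def by simp
  next
    assume "p \<notin> J" "q \<in> J" then show ?thesis using ne[of q] unfolding psi_def by auto
  next
    assume "p \<notin> J" "q \<notin> J" then show ?thesis unfolding psi_def by simp
  qed
qed

lemma frag_edges_eq:
  assumes J: "J \<in> AA"
  shows "edges (fragment G J) = {e\<in>edges G. endpts G e \<inter> J \<noteq> {}}"
proof (intro set_eqI)
  fix e
  show "e \<in> edges (fragment G J) \<longleftrightarrow> e \<in> {e\<in>edges G. endpts G e \<inter> J \<noteq> {}}"
  proof (cases "e \<in> edges G")
    case True
    obtain p q where pq: "p \<noteq> q" "endpts G e = {p,q}" "p \<in> verts G" "q \<in> verts G" by (rule ep2E[OF mg True])
    have JV: "J \<subseteq> verts G" using A_sub[OF J] by blast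
    have "card (psi J ` endpts G e) = 2 \<longleftrightarrow> endpts G e \<inter> J \<noteq> {}"
      using psi_card[OF pq(1) JV] pq(2) by auto
    then show ?thesis unfolding frag_parts using True by simp
  next
    case False then show ?thesis unfolding frag_parts by simp
  qed
qed

lemma deg_frag_out:
  assumes J: "J \<in> AA" and F: "F \<subseteq> edges (fragment G J)"
  shows "deg_in F (fragment G J) (verts G - J) = card (F \<inter> cutE G (edges G) J)"
proof -
  have "{e\<in>F. verts G - J \<in> endpts (fragment G J) e} = F \<inter> cutE G (edges G) J"
  proof (intro set_eqI)
    fix e
    show "e \<in> {e\<in>F. verts G - J \<in> endpts (fragment G J) e} \<longleftrightarrow> e \<in> F \<inter> cutE G (edges G) J"
    proof (cases "e \<in> F")
      case True
      then have eE: "e \<in> edges G" and eJ: "endpts G e \<inter> J \<noteq> {}" using F frag_edges_eq[OF J] by auto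
      obtain p q where pq: "p \<noteq> q" "endpts G e = {p,q}" "p \<in> verts G" "q \<in> verts G" by (rule ep2E[OF mg eE])
      have ps: "psi J x = verts G - J \<longleftrightarrow> x \<notin> J" if "x \<in> verts G" for x
        unfolding psi_def using that by auto
      have "verts G - J \<in> psi J ` endpts G e \<longleftrightarrow> p \<notin> J \<or> q \<notin> J" using ps pq by auto
      also have "\<dots> \<longleftrightarrow> card (endpts G e \<inter> J) = 1" using card_int1[OF pq(1), of J] pq(2) eJ by auto
      finally show ?thesis unfolding frag_parts cutE_def using True eE by auto
    next
      case False then show ?thesis by simp
    qed
  qed
  then show ?thesis unfolding deg_in_def by simp
qed

lemma deg_frag_in:
  assumes J: "J \<in> AA" and F: "F \<subseteq> edges (fragment G J)" and w: "w \<in> J"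
  shows "deg_in F (fragment G J) {w} = deg_in F G w"
proof -
  have "{e\<in>F. {w} \<in> endpts (fragment G J) e} = {e\<in>F. w \<in> endpts G e}"
  proof (intro set_eqI)
    fix e
    show "e \<in> {e\<in>F. {w} \<in> endpts (fragment G J) e} \<longleftrightarrow> e \<in> {e\<in>F. w \<in> endpts G e}"
    proof (cases "e \<in> F")
      case True
      have ps: "psi J x = {w} \<longleftrightarrow> x = w" for x
        unfolding psi_def using w by auto
      have "{w} \<in> psi J ` endpts G e \<longleftrightarrow> w \<in> endpts G e"
      proof
        assume "{w} \<in> psi J ` endpts G e"
        then obtain x where "x \<in> endpts G e" "psi J x = {w}" by (metis imageE)
        then show "w \<in> endpts G e" using ps by simp
      next
        assume "w \<in> endpts G e"
        moreover have "psi J w = {w}" using ps by simp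
        ultimately show "{w} \<in> psi J ` endpts G e" by (metis imageI)
      qed
      then show ?thesis unfolding frag_parts using True by simp
    next
      case False then show ?thesis by simp
    qed
  qed
  then show ?thesis unfolding deg_in_def by simp
qed

lemma frag_verts_cases: "u \<in> verts (fragment G J) \<Longrightarrow> u = verts G - J \<or> (\<exists>w\<in>J. u = {w})"
  unfolding frag_parts psi_def by auto

lemma out_frag: "J \<in> AA \<Longrightarrow> verts G - J \<in> verts (fragment G J)"
proof -
  assume J: "J \<in> AA"
  have "b \<notin> J" "b \<in> verts G" using A_sub[OF J] bB BV by auto
  then have "psi J b = verts G - J" unfolding psi_def by simp
  then show ?thesis unfolding frag_parts using image_eqI[of "verts G - J" "psi J" b "verts G"] \<open>b \<in> verts G\<close> by simp
qed

lemma at_B: "e \<in> edges G \<Longrightarrow> v \<in> B \<Longrightarrow> v \<in> endpts G e \<Longrightarrow> e \<in> cutE G (edges G) B"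
proof -
  assume a: "e \<in> edges G" "v \<in> B" "v \<in> endpts G e"
  obtain p q where pq: "p \<noteq> q" "endpts G e = {p,q}" "p \<in> verts G" "q \<in> verts G" by (rule ep2E[OF mg a(1)])
  have "\<not> (p \<in> B \<and> q \<in> B)"
  proof
    assume "p \<in> B \<and> q \<in> B"
    then have "card (endpts G e \<inter> B) = 2" using pq card_int2[OF pq(1), of B] by simp
    then have "e \<in> inE G (edges G) B" unfolding inE_def using a by blast
    then show False using struc(3) by blast
  qed
  then have "card (endpts G e \<inter> B) = 1" using card_int1[OF pq(1), of B] pq(2) a(2,3) by auto
  then show ?thesis unfolding cutE_def using a by blast
qed

end


context cg
begin

lemma forward:
  assumes lm: "lambda_matchable G b"
  shows "\<exists>J \<in> AA. lambda_matchable_pair (core G B) J {b} \<and> lambda_matchable (fragment G J) (verts G - J)"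
proof -
  obtain F where F: "F \<subseteq> edges G" "deg_in F G b = 3" "\<forall>u\<in>verts G - {b}. deg_in F G u = 1"
    using lm unfolding lambda_matchable_def by blast
  have cF: "\<And>X. cutE G F X = F \<inter> cutE G (edges G) X" using cutF[OF F(1)] .
  define f where "f = (\<lambda>C. card (F \<inter> cutE G (edges G) C))"
  have fodd: "odd (f C)" and f3: "f C \<le> 3" if C: "C \<in> AA" for C
  proof -
    have "(\<Sum>v\<in>C. deg_in F G v) = (\<Sum>v\<in>C. 1)"
    proof (rule sum.cong[OF refl])
      fix v assume "v \<in> C"
      then have "v \<in> verts G - {b}" using A_sub[OF C] bB by blast
      then show "deg_in F G v = 1" using F(3) by blast
    qed
    then have "card C = card (cutE G F C) + 2 * card (inE G F C)"
      using double_count[OF mg F(1) C_fin[OF C]] by simp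
    moreover have "odd (card C)" using struc(1) C by blast
    ultimately have "odd (card (cutE G F C))" by presburger
    then show "odd (f C)" unfolding f_def using cF by simp
    have "F \<inter> cutE G (edges G) C \<subseteq> cutE G (edges G) C" by blast
    moreover have "finite (cutE G (edges G) C)" using finE unfolding cutE_def by simp
    ultimately have "f C \<le> card (cutE G (edges G) C)" unfolding f_def by (rule card_mono[rotated])
    then show "f C \<le> 3" using struc(2) C by simp
  qed
  have "(\<Sum>v\<in>B. deg_in F G v) = deg_in F G b + (\<Sum>v\<in>B - {b}. deg_in F G v)"
    using sum.remove[OF finB bB] by simp
  also have "(\<Sum>v\<in>B - {b}. deg_in F G v) = (\<Sum>v\<in>B - {b}. 1)"
  proof (rule sum.cong[OF refl])
    fix v assume "v \<in> B - {b}"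
    then have "v \<in> verts G - {b}" using BV by blast
    then show "deg_in F G v = 1" using F(3) by blast
  qed
  finally have sB: "(\<Sum>v\<in>B. deg_in F G v) = card B + 2"
    using F(2) bB finB by (simp add: card_Diff_singleton) (metis Suc_pred card_gt_0_iff empty_iff)
  have "inE G F B \<subseteq> inE G (edges G) B" using F(1) unfolding inE_def by blast
  then have in0: "inE G F B = {}" using struc(3) by blast
  have cB: "card (cutE G F B) = card B + 2" using double_count[OF mg F(1) finB] sB in0 by simp
  have "cutE G F B = (\<Union>C\<in>AA. F \<inter> cutE G (edges G) C)" using cF cutB_union by blast
  moreover have "card (\<Union>C\<in>AA. F \<inter> cutE G (edges G) C) = (\<Sum>C\<in>AA. f C)"
    unfolding f_def
  proof (rule card_UN_disjoint[OF A_fin])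
    show "\<forall>C\<in>AA. finite (F \<inter> cutE G (edges G) C)" using finE unfolding cutE_def by simp
    show "\<forall>C\<in>AA. \<forall>D\<in>AA. C \<noteq> D \<longrightarrow> F \<inter> cutE G (edges G) C \<inter> (F \<inter> cutE G (edges G) D) = {}"
      using cut_disj by blast
  qed
  ultimately have sumf: "(\<Sum>C\<in>AA. f C) = card B + 2" using cB by simp
  have f13: "f C = 1 \<or> f C = 3" if "C \<in> AA" for C using fodd[OF that] f3[OF that] by presburger
  obtain J where J: "J \<in> AA" "f J = 3"
  proof (rule ccontr)
    assume "\<not> thesis"
    then have "\<forall>C\<in>AA. f C = 1" using f13 that by blast
    then have "(\<Sum>C\<in>AA. f C) = card AA" by simp
    then show False using sumf struc(4) by simp
  qed
  have "(\<Sum>C\<in>AA. f C) = f J + (\<Sum>C\<in>AA - {J}. f C)" using sum.remove[OF A_fin J(1)] .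
  then have s1: "(\<Sum>C\<in>AA - {J}. f C) \<le> 1 * card (AA - {J})"
    using sumf J struc(4) by (simp add: card_Diff_singleton)
  have fo: "\<forall>C\<in>AA - {J}. f C = 1"
  proof (rule sum_all3)
    show "finite (AA - {J})" using A_fin by simp
    show "\<forall>C\<in>AA - {J}. 1 \<le> f C" using fodd by (metis DiffD1 odd_pos Suc_leI One_nat_def)
  qed (use s1 in simp)
  define F1 where "F1 = F \<inter> cutE G (edges G) B"
  have F1B: "F1 \<subseteq> cutE G (edges G) B" unfolding F1_def by blast
  have F1F: "F1 \<inter> cutE G (edges G) C = F \<inter> cutE G (edges G) C" if "C \<in> AA" for C
    unfolding F1_def using cut_subB[OF that] by blast
  have degv: "deg_in F1 G v = deg_in F G v" if "v \<in> B" for v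
  proof -
    have "{e\<in>F1. v \<in> endpts G e} = {e\<in>F. v \<in> endpts G e}"
      unfolding F1_def using at_B that F(1) by blast
    then show ?thesis unfolding deg_in_def by simp
  qed
  have pair: "lambda_matchable_pair (core G B) J {b}"
    unfolding lambda_matchable_pair_def
  proof (intro conjI)
    show "J \<in> verts (core G B)" using C_core[OF J(1)] .
    show "{b} \<in> verts (core G B)" using v_core[OF bB] .
    show "J \<noteq> {b}" using C_ne_v[OF J(1) bB] .
    show "\<exists>F\<subseteq>edges (core G B). deg_in F (core G B) J = 3 \<and> deg_in F (core G B) {b} = 3 \<and>
        (\<forall>u\<in>verts (core G B) - {J, {b}}. deg_in F (core G B) u = 1)"
    proof (intro exI conjI)
      show "F1 \<subseteq> edges (core G B)" using F1B core_edges_eq by simp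
      show "deg_in F1 (core G B) J = 3" using deg_core_C[OF F1B J(1)] F1F[OF J(1)] J(2) unfolding f_def by simp
      show "deg_in F1 (core G B) {b} = 3" using deg_core_v[OF F1B bB] degv[OF bB] F(2) by simp
      show "\<forall>u\<in>verts (core G B) - {J, {b}}. deg_in F1 (core G B) u = 1"
      proof
        fix u assume u: "u \<in> verts (core G B) - {J, {b}}"
        then consider (v) v where "v \<in> B" "u = {v}" | (c) "u \<in> AA" using core_verts_cases by blast
        then show "deg_in F1 (core G B) u = 1"
        proof cases
          case v
          then have "v \<noteq> b" using u by blast
          then have "v \<in> verts G - {b}" using v BV by blast
          then show ?thesis using deg_core_v[OF F1B v(1)] degv[OF v(1)] F(3) v(2) by simp
        next
          case c
          then have "u \<in> AA - {J}" using u by blast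
          then show ?thesis using deg_core_C[OF F1B c] F1F[OF c] fo unfolding f_def by simp
        qed
      qed
    qed
  qed
  define F2 where "F2 = {e\<in>F. endpts G e \<inter> J \<noteq> {}}"
  have F2E: "F2 \<subseteq> edges (fragment G J)" unfolding F2_def frag_edges_eq[OF J(1)] using F(1) by blast
  have lmf: "lambda_matchable (fragment G J) (verts G - J)"
    unfolding lambda_matchable_def
  proof (intro conjI exI)
    show "verts G - J \<in> verts (fragment G J)" using out_frag[OF J(1)] .
    show "F2 \<subseteq> edges (fragment G J)" using F2E .
    have "F2 \<inter> cutE G (edges G) J = F \<inter> cutE G (edges G) J"
      unfolding F2_def cutE_def by (auto simp: card_gt_0_iff[symmetric])
    then show "deg_in F2 (fragment G J) (verts G - J) = 3"
      using deg_frag_out[OF J(1) F2E] J(2) unfolding f_def by simp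
    show "\<forall>u\<in>verts (fragment G J) - {verts G - J}. deg_in F2 (fragment G J) u = 1"
    proof
      fix u assume u: "u \<in> verts (fragment G J) - {verts G - J}"
      then obtain w where w: "w \<in> J" "u = {w}" using frag_verts_cases by blast
      have "{e\<in>F2. w \<in> endpts G e} = {e\<in>F. w \<in> endpts G e}" unfolding F2_def using w by blast
      then have "deg_in F2 G w = deg_in F G w" unfolding deg_in_def by simp
      moreover have "w \<in> verts G - {b}" using w A_sub[OF J(1)] bB by blast
      ultimately show "deg_in F2 (fragment G J) u = 1" using deg_frag_in[OF J(1) F2E w(1)] w F(3) by simp
    qed
  qed
  show ?thesis using J(1) pair lmf by blast
qed

end


lemma lift_pm:
  assumes mgG: "mgraph G" and pmm: "pm (adjG G) W m"
  shows "\<exists>M\<subseteq>edges G. (\<forall>e\<in>M. endpts G e \<subseteq> W) \<and> (\<forall>v\<in>W. deg_in M G v = 1)"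
proof -
  define edS where "edS = (\<lambda>s. SOME e. e \<in> edges G \<and> endpts G e = s)"
  have ed: "edS {v, m v} \<in> edges G \<and> endpts G (edS {v, m v}) = {v, m v}" if "v \<in> W" for v
  proof -
    have "adjG G v (m v)" using pmm that unfolding pm_def by blast
    then have "\<exists>e. e \<in> edges G \<and> endpts G e = {v, m v}" unfolding adjG_def by blast
    then show ?thesis unfolding edS_def by (rule someI_ex)
  qed
  define M where "M = (\<lambda>v. edS {v, m v}) ` W"
  have "M \<subseteq> edges G" unfolding M_def using ed by blast
  moreover have "\<forall>e\<in>M. endpts G e \<subseteq> W"
  proof
    fix e assume "e \<in> M"
    then obtain w where w: "w \<in> W" "e = edS {w, m w}" unfolding M_def by blast
    have "m w \<in> W" using pmm w unfolding pm_def by blast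
    then show "endpts G e \<subseteq> W" using ed[OF w(1)] w by simp
  qed
  moreover have "\<forall>v\<in>W. deg_in M G v = 1"
  proof
    fix v assume v: "v \<in> W"
    have "{e\<in>M. v \<in> endpts G e} = {edS {v, m v}}"
    proof (intro set_eqI iffI)
      fix e assume "e \<in> {e\<in>M. v \<in> endpts G e}"
      then obtain w where w: "w \<in> W" "e = edS {w, m w}" "v \<in> endpts G e" unfolding M_def by blast
      then have "v = w \<or> v = m w" using ed[OF w(1)] by simp
      then show "e \<in> {edS {v, m v}}"
      proof
        assume "v = w" then show ?thesis using w by simp
      next
        assume h: "v = m w"
        then have "m v = w" using pmm w(1) unfolding pm_def by simp
        then have "{v, m v} = {w, m w}" using h by auto
        then show ?thesis using w by simp
      qed
    next
      fix e assume "e \<in> {edS {v, m v}}"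
      then show "e \<in> {e\<in>M. v \<in> endpts G e}" unfolding M_def using ed[OF v] v by auto
    qed
    then show "deg_in M G v = 1" unfolding deg_in_def by simp
  qed
  ultimately show ?thesis by blast
qed

context cg
begin

lemma incE_card: "X \<subseteq> verts G \<Longrightarrow> finite X \<Longrightarrow> card (incE G X) \<le> 3 * card X"
proof -
  assume X: "X \<subseteq> verts G" "finite X"
  have "incE G X = (\<Union>x\<in>X. {e\<in>edges G. x \<in> endpts G e})" unfolding incE_def by blast
  then have "card (incE G X) \<le> (\<Sum>x\<in>X. card {e\<in>edges G. x \<in> endpts G e})"
    using card_UN_le[OF X(2)] by simp
  also have "\<dots> = (\<Sum>x\<in>X. 3)"
  proof (rule sum.cong[OF refl])
    fix x assume "x \<in> X"
    then show "card {e\<in>edges G. x \<in> endpts G e} = 3" using deg3 X unfolding deg_in_def by blast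
  qed
  finally show ?thesis by simp
qed

lemma comp_tutte:
  assumes C: "C \<in> AA" and e0: "e0 \<in> cutE G (edges G) C" and ep0: "endpts G e0 = {u, z}"
    and u: "u \<in> C" and z: "z \<in> B"
  shows "\<exists>m. pm (adjG G) (C - {u}) m"
proof -
  let ?R = "adjG G"
  have CV: "C \<subseteq> verts G - B" using A_sub[OF C] .
  have finC: "finite C" using C_fin[OF C] .
  have oC: "odd (card C)" using struc(1) C by blast
  have c3: "card (cutE G (edges G) C) = 3" using struc(2) C by blast
  have finCut: "finite (cutE G (edges G) C)" using finE unfolding cutE_def by simp
  have tc: "\<forall>T\<subseteq>C - {u}. oddc ?R (C - {u} - T) \<le> card T"
  proof (intro allI impI)
    fix T assume T: "T \<subseteq> C - {u}"
    define Wt where "Wt = C - {u} - T"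
    define Q where "Q = {D \<in> cmps ?R Wt. odd (card D)}"
    have finT: "finite T" using T finC finite_subset by blast
    have finWt: "finite Wt" unfolding Wt_def using finC by simp
    have finQ: "finite Q" unfolding Q_def using cmps_finite[OF finWt] by simp
    have QW: "D \<subseteq> Wt" if "D \<in> Q" for D using that cmps_sub unfolding Q_def by blast
    define X where "X = insert u T"
    have XV: "X \<subseteq> verts G" unfolding X_def using T u CV by blast
    have finX: "finite X" unfolding X_def using finT by simp
    have "u \<notin> T" using T by blast
    then have cX: "card X = card T + 1" unfolding X_def using finT by simp
    define Z where "Z = (incE G X \<union> cutE G (edges G) C) - {e0}"
    have cutD_ends: "\<exists>x y. endpts G e = {x,y} \<and> x \<in> D \<and> y \<notin> D \<and> y \<in> verts G"
      if D: "D \<in> Q" and e: "e \<in> cutE G (edges G) D" for D e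
    proof -
      have eE: "e \<in> edges G" and c1: "card (endpts G e \<inter> D) = 1" using e unfolding cutE_def by auto
      obtain p q where pq: "p \<noteq> q" "endpts G e = {p,q}" "p \<in> verts G" "q \<in> verts G" by (rule ep2E[OF mg eE])
      have "(p \<in> D \<and> q \<notin> D) \<or> (q \<in> D \<and> p \<notin> D)" using c1 pq card_int1 by metis
      then show ?thesis using pq by (metis insert_commute)
    qed
    have sub: "cutE G (edges G) D \<subseteq> Z" if D: "D \<in> Q" for D
    proof
      fix e assume e: "e \<in> cutE G (edges G) D"
      have eE: "e \<in> edges G" using e unfolding cutE_def by auto
      obtain x y where xy: "endpts G e = {x,y}" "x \<in> D" "y \<notin> D" "y \<in> verts G" using cutD_ends[OF D e] by blast
      have xW: "x \<in> Wt" using QW[OF D] xy by blast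
      have "e \<noteq> e0"
      proof
        assume "e = e0"
        then have "x \<in> {u, z}" using xy ep0 by auto
        moreover have "x \<noteq> u" using xW unfolding Wt_def by blast
        moreover have "x \<noteq> z" using xW CV z unfolding Wt_def by blast
        ultimately show False by blast
      qed
      moreover have "e \<in> incE G X \<union> cutE G (edges G) C"
      proof (cases "y \<in> X")
        case True
        then show ?thesis unfolding incE_def using eE xy by blast
      next
        case yX: False
        show ?thesis
        proof (cases "y \<in> C")
          case True
          then have yW: "y \<in> Wt" using yX unfolding Wt_def X_def by blast
          have "?R x y" unfolding adjG_def using eE xy by blast
          then have "y \<in> D" using cmps_closed[OF symR_adjG[of G], of D Wt x y] D xy(2) yW unfolding Q_def by blast
          then show ?thesis using xy by blast
        next
          case False
          have "x \<in> C" using xW unfolding Wt_def by blast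
          moreover have "x \<noteq> y" using xy by blast
          ultimately have "card (endpts G e \<inter> C) = 1" using xy False card_int1 by metis
          then show ?thesis unfolding cutE_def using eE by blast
        qed
      qed
      ultimately show "e \<in> Z" unfolding Z_def by blast
    qed
    have disj: "cutE G (edges G) D1 \<inter> cutE G (edges G) D2 = {}"
      if D1: "D1 \<in> Q" and D2: "D2 \<in> Q" and ne: "D1 \<noteq> D2" for D1 D2
    proof (rule ccontr)
      assume "\<not> ?thesis"
      then obtain e where e: "e \<in> cutE G (edges G) D1" "e \<in> cutE G (edges G) D2" by blast
      have eE: "e \<in> edges G" using e unfolding cutE_def by auto
      obtain x1 y1 where xy1: "endpts G e = {x1,y1}" "x1 \<in> D1" "y1 \<notin> D1" using cutD_ends[OF D1 e(1)] by blast
      obtain x2 y2 where xy2: "endpts G e = {x2,y2}" "x2 \<in> D2" "y2 \<notin> D2" using cutD_ends[OF D2 e(2)] by blast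
      have dd: "D1 \<inter> D2 = {}" using cmps_disj[OF symR_adjG[of G], of D1 Wt D2] D1 D2 ne unfolding Q_def by blast
      have "x1 \<noteq> x2" using dd xy1 xy2 by blast
      then have h: "x1 = y2 \<and> y1 = x2" using xy1(1) xy2(1) by (metis doubleton_eq_iff)
      have "?R x1 x2" unfolding adjG_def using eE xy1 h by blast
      moreover have "x1 \<in> Wt" "x2 \<in> Wt" using QW D1 D2 xy1 xy2 by blast+
      ultimately have "x2 \<in> D1" using cmps_closed[OF symR_adjG[of G], of D1 Wt x1 x2] D1 xy1 unfolding Q_def by blast
      then show False using dd xy2 by blast
    qed
    have ge3: "card (cutE G (edges G) D) \<ge> 3" if D: "D \<in> Q" for D
    proof -
      have "D \<subseteq> verts G" using QW[OF D] CV unfolding Wt_def by blast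
      moreover have "D \<noteq> {}" using D cmps_ne unfolding Q_def by blast
      moreover have "u \<in> verts G - D" using QW[OF D] u CV unfolding Wt_def by blast
      moreover have "odd (card D)" using D unfolding Q_def by blast
      ultimately show ?thesis using cut_ge3 by blast
    qed
    have "3 * card Q \<le> (\<Sum>D\<in>Q. card (cutE G (edges G) D))"
      using sum_mono[of Q "\<lambda>_. 3" "\<lambda>D. card (cutE G (edges G) D)"] ge3 by simp
    also have "\<dots> = card (\<Union>D\<in>Q. cutE G (edges G) D)"
    proof (rule card_UN_disjoint[symmetric, OF finQ])
      show "\<forall>D\<in>Q. finite (cutE G (edges G) D)" using finE unfolding cutE_def by simp
      show "\<forall>D\<in>Q. \<forall>D'\<in>Q. D \<noteq> D' \<longrightarrow> cutE G (edges G) D \<inter> cutE G (edges G) D' = {}" using disj by blast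
    qed
    also have "\<dots> \<le> card Z"
    proof (rule card_mono)
      show "finite Z" unfolding Z_def incE_def cutE_def using finE by simp
      show "(\<Union>D\<in>Q. cutE G (edges G) D) \<subseteq> Z" using sub by blast
    qed
    also have "card Z = card (incE G X \<union> cutE G (edges G) C) - 1"
      unfolding Z_def using e0 by (simp add: card_Diff_singleton)
    also have "\<dots> \<le> card (incE G X) + card (cutE G (edges G) C) - 1"
      using card_Un_le[of "incE G X" "cutE G (edges G) C"] by simp
    also have "\<dots> \<le> 3 * card X + 3 - 1" using incE_card[OF XV finX] c3 by simp
    finally have le: "3 * card Q \<le> 3 * card T + 5" using cX by simp
    have par: "even (card Q + card Wt)" using oddc_parity[OF symR_adjG finWt] unfolding oddc_def Q_def by simp
    have cW: "card Wt + card T + 1 = card C"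
    proof -
      have "card Wt = card (C - {u}) - card T" unfolding Wt_def using card_Diff_subset[OF finT T] .
      moreover have "card (C - {u}) = card C - 1" using u by (simp add: card_Diff_singleton)
      moreover have "card T \<le> card (C - {u})" using card_mono[of "C - {u}" T] finC T by simp
      moreover have "card C > 0" using u finC by (auto simp: card_gt_0_iff)
      ultimately show ?thesis by simp
    qed
    have "card Q \<noteq> card T + 1"
    proof
      assume "card Q = card T + 1"
      then have "even (card C)" using par cW by (metis add.commute add.left_commute)
      then show False using oC by blast
    qed
    then have "card Q \<le> card T" using le by linarith
    then show "oddc ?R (C - {u} - T) \<le> card T" unfolding oddc_def Q_def Wt_def .
  qed
  have "finite (C - {u})" using finC by simp
  then show ?thesis using tutte[OF symR_adjG] tc by blast
qed

end


context cg
begin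

lemma cutB_at_C:
  assumes e: "e \<in> cutE G (edges G) B" and C: "C \<in> AA" and v: "v \<in> C" "v \<in> endpts G e"
  shows "e \<in> cutE G (edges G) C"
proof -
  obtain x y where xy: "endpts G e = {x,y}" "x \<in> B" "y \<notin> B" "y \<in> verts G" using cutB_ends[OF e] by blast
  have "v \<notin> B" using A_sub[OF C] v by blast
  then have "v = y" using xy v by auto
  have "x \<notin> C" using A_sub[OF C] xy by blast
  moreover have "x \<noteq> y" using xy by blast
  ultimately have "card (endpts G e \<inter> C) = 1" using xy v \<open>v = y\<close> card_int1 by metis
  then show ?thesis using e unfolding cutE_def by blast
qed

lemma noJC:
  assumes J: "J \<in> AA" and C: "C \<in> AA" and ne: "C \<noteq> J" and eE: "e \<in> edges G"
    and eJ: "endpts G e \<inter> J \<noteq> {}" and v: "v \<in> C" "v \<in> endpts G e"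
  shows False
proof -
  obtain w where w: "w \<in> J" "w \<in> endpts G e" using eJ by blast
  obtain p q where pq: "p \<noteq> q" "endpts G e = {p,q}" "p \<in> verts G" "q \<in> verts G" by (rule ep2E[OF mg eE])
  have dj: "C \<inter> J = {}" using A_disj[OF C J ne] .
  then have "w \<noteq> v" using w v by blast
  then have ev: "endpts G e = {w, v}" using pq w v by auto
  then have "adjG G w v" unfolding adjG_def using eE by blast
  moreover have "v \<in> verts G" "v \<notin> J" using A_sub[OF C] v dj by blast+
  ultimately have "v \<in> B" using A_closed[OF J w(1)] by blast
  then show False using A_sub[OF C] v by blast
qed

lemma full_cut:
  assumes C: "C \<in> AA" and c: "card (F \<inter> cutE G (edges G) C) = 3"
  shows "cutE G (edges G) C \<subseteq> F"
proof -
  have fin: "finite (cutE G (edges G) C)" using finE unfolding cutE_def by simp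
  have "F \<inter> cutE G (edges G) C = cutE G (edges G) C"
    using card_subset_eq[OF fin, of "F \<inter> cutE G (edges G) C"] c struc(2) C by simp
  then show ?thesis by blast
qed

lemma backward:
  assumes J: "J \<in> AA" and pr: "lambda_matchable_pair (core G B) J {b}"
    and lf: "lambda_matchable (fragment G J) (verts G - J)"
  shows "lambda_matchable G b"
proof -
  obtain F1 where F1: "F1 \<subseteq> edges (core G B)" "deg_in F1 (core G B) J = 3" "deg_in F1 (core G B) {b} = 3"
      "\<forall>u\<in>verts (core G B) - {J, {b}}. deg_in F1 (core G B) u = 1"
    using pr unfolding lambda_matchable_pair_def by blast
  obtain F2 where F2: "F2 \<subseteq> edges (fragment G J)" "deg_in F2 (fragment G J) (verts G - J) = 3"
      "\<forall>u\<in>verts (fragment G J) - {verts G - J}. deg_in F2 (fragment G J) u = 1"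
    using lf unfolding lambda_matchable_def by blast
  have F1B: "F1 \<subseteq> cutE G (edges G) B" using F1(1) core_edges_eq by simp
  have F2J: "F2 \<subseteq> {e\<in>edges G. endpts G e \<inter> J \<noteq> {}}" using F2(1) frag_edges_eq[OF J] by simp
  have cutJ1: "cutE G (edges G) J \<subseteq> F1" using full_cut[OF J] deg_core_C[OF F1B J] F1(2) by simp
  have cutJ2: "cutE G (edges G) J \<subseteq> F2" using full_cut[OF J] deg_frag_out[OF J F2(1)] F2(2) by simp
  have one: "card (F1 \<inter> cutE G (edges G) C) = 1" if C: "C \<in> AA - {J}" for C
  proof -
    have "C \<in> verts (core G B) - {J, {b}}" using C C_core C_ne_v[OF _ bB] by blast
    then have "deg_in F1 (core G B) C = 1" using F1(4) by blast
    then show ?thesis using deg_core_C[OF F1B] C by simp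
  qed
  define P where "P = (\<lambda>C u M. u \<in> C \<and> (\<forall>e\<in>F1 \<inter> cutE G (edges G) C. \<exists>z\<in>B. endpts G e = {u,z}) \<and>
      M \<subseteq> edges G \<and> (\<forall>e\<in>M. endpts G e \<subseteq> C - {u}) \<and> (\<forall>v\<in>C - {u}. deg_in M G v = 1))"
  have exP: "\<exists>u M. P C u M" if C: "C \<in> AA - {J}" for C
  proof -
    obtain e1 where e1: "F1 \<inter> cutE G (edges G) C = {e1}" using one[OF C] by (meson card_1_singletonE)
    have CA: "C \<in> AA" using C by blast
    have e1c: "e1 \<in> cutE G (edges G) C" using e1 by blast
    obtain p q where pq: "endpts G e1 = {p,q}" "p \<in> C" "q \<in> B" using cutC[OF CA e1c] by blast
    obtain m where m: "pm (adjG G) (C - {p}) m" using comp_tutte[OF CA e1c pq] by blast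
    obtain M where M: "M \<subseteq> edges G" "\<forall>e\<in>M. endpts G e \<subseteq> C - {p}" "\<forall>v\<in>C - {p}. deg_in M G v = 1"
      using lift_pm[OF mg m] by blast
    have h: "\<forall>e\<in>F1 \<inter> cutE G (edges G) C. \<exists>z\<in>B. endpts G e = {p,z}" using e1 pq by auto
    have "P C p M" unfolding P_def using pq(2) M h by simp
    then show ?thesis by blast
  qed
  then have "\<forall>C\<in>AA - {J}. \<exists>u. \<exists>M. P C u M" by blast
  then obtain uf where "\<forall>C\<in>AA - {J}. \<exists>M. P C (uf C) M" by (metis bchoice)
  then obtain Mf where PM: "\<forall>C\<in>AA - {J}. P C (uf C) (Mf C)" by (metis bchoice)
  define F where "F = F1 \<union> F2 \<union> (\<Union>C\<in>AA - {J}. Mf C)"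
  have FE: "F \<subseteq> edges G"
  proof -
    have "F1 \<subseteq> edges G" using F1B unfolding cutE_def by blast
    moreover have "F2 \<subseteq> edges G" using F2J by blast
    moreover have "\<forall>C\<in>AA - {J}. Mf C \<subseteq> edges G" using PM unfolding P_def by blast
    ultimately show ?thesis unfolding F_def by blast
  qed
  have MfC: "endpts G e \<subseteq> C" if "C \<in> AA - {J}" "e \<in> Mf C" for C e
    using PM that unfolding P_def by blast
  have degB: "deg_in F G v = deg_in F1 G v" if v: "v \<in> B" for v
  proof -
    have "{e\<in>F. v \<in> endpts G e} = {e\<in>F1. v \<in> endpts G e}"
    proof (intro set_eqI iffI)
      fix e assume e: "e \<in> {e\<in>F. v \<in> endpts G e}"
      then have ve: "v \<in> endpts G e" by blast
      consider (a) "e \<in> F1" | (c) "e \<in> F2" | (d) C where "C \<in> AA - {J}" "e \<in> Mf C"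
        using e unfolding F_def by blast
      then show "e \<in> {e\<in>F1. v \<in> endpts G e}"
      proof cases
        case a then show ?thesis using ve by blast
      next
        case c
        then have eE: "e \<in> edges G" and eJ: "endpts G e \<inter> J \<noteq> {}" using F2J by auto
        obtain p q where pq: "p \<noteq> q" "endpts G e = {p,q}" "p \<in> verts G" "q \<in> verts G" by (rule ep2E[OF mg eE])
        have "v \<notin> J" using A_sub[OF J] v by blast
        then have "card (endpts G e \<inter> J) = 1" using card_int1[OF pq(1), of J] pq(2) eJ ve by auto
        then have "e \<in> cutE G (edges G) J" unfolding cutE_def using eE by blast
        then show ?thesis using cutJ1 ve by blast
      next
        case d
        then have "v \<in> C" using MfC ve by blast
        then show ?thesis using A_sub d(1) v by blast
      qed
    next
      fix e assume "e \<in> {e\<in>F1. v \<in> endpts G e}"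
      then show "e \<in> {e\<in>F. v \<in> endpts G e}" unfolding F_def by blast
    qed
    then show ?thesis unfolding deg_in_def by simp
  qed
  have degJ: "deg_in F G v = deg_in F2 G v" if v: "v \<in> J" for v
  proof -
    have "{e\<in>F. v \<in> endpts G e} = {e\<in>F2. v \<in> endpts G e}"
    proof (intro set_eqI iffI)
      fix e assume e: "e \<in> {e\<in>F. v \<in> endpts G e}"
      then have ve: "v \<in> endpts G e" by blast
      consider (a) "e \<in> F1" | (c) "e \<in> F2" | (d) C where "C \<in> AA - {J}" "e \<in> Mf C"
        using e unfolding F_def by blast
      then show "e \<in> {e\<in>F2. v \<in> endpts G e}"
      proof cases
        case a
        then have "e \<in> cutE G (edges G) J" using cutB_at_C[OF _ J v ve] F1B by blast
        then show ?thesis using cutJ2 ve by blast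
      next
        case c then show ?thesis using ve by blast
      next
        case d
        then have "v \<in> C" using MfC ve by blast
        moreover have "C \<inter> J = {}" using A_disj[of C J] d(1) J by blast
        ultimately show ?thesis using v by blast
      qed
    next
      fix e assume "e \<in> {e\<in>F2. v \<in> endpts G e}"
      then show "e \<in> {e\<in>F. v \<in> endpts G e}" unfolding F_def by blast
    qed
    then show ?thesis unfolding deg_in_def by simp
  qed
  have degC: "deg_in F G v = (if v = uf C then card (F1 \<inter> cutE G (edges G) C) else deg_in (Mf C) G v)"
    if C: "C \<in> AA - {J}" and v: "v \<in> C" for C v
  proof -
    have PC: "P C (uf C) (Mf C)" using PM C by blast
    have CA: "C \<in> AA" using C by blast
    have vB: "v \<notin> B" using A_sub[OF CA] v by blast
    have base: "{e\<in>F. v \<in> endpts G e} = {e\<in>F1. v \<in> endpts G e} \<union> {e\<in>Mf C. v \<in> endpts G e}"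
    proof (intro set_eqI iffI)
      fix e assume e: "e \<in> {e\<in>F. v \<in> endpts G e}"
      then have ve: "v \<in> endpts G e" by blast
      consider (a) "e \<in> F1" | (c) "e \<in> F2" | (d) C' where "C' \<in> AA - {J}" "e \<in> Mf C'"
        using e unfolding F_def by blast
      then show "e \<in> {e\<in>F1. v \<in> endpts G e} \<union> {e\<in>Mf C. v \<in> endpts G e}"
      proof cases
        case a then show ?thesis using ve by blast
      next
        case c
        then have "e \<in> edges G" "endpts G e \<inter> J \<noteq> {}" using F2J by auto
        then show ?thesis using noJC[OF J CA _ _ _ v ve] C by blast
      next
        case d
        then have vC': "v \<in> C'" using MfC ve by blast
        have "C' = C"
        proof (rule ccontr)
          assume "C' \<noteq> C"
          then have "C' \<inter> C = {}" using A_disj[of C' C] d(1) CA by blast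
          then show False using vC' v by blast
        qed
        then show ?thesis using d ve by blast
      qed
    next
      fix e assume "e \<in> {e\<in>F1. v \<in> endpts G e} \<union> {e\<in>Mf C. v \<in> endpts G e}"
      then show "e \<in> {e\<in>F. v \<in> endpts G e}" unfolding F_def using C by blast
    qed
    have F1part: "{e\<in>F1. v \<in> endpts G e} = (if v = uf C then F1 \<inter> cutE G (edges G) C else {})"
    proof (intro set_eqI iffI)
      fix e assume e: "e \<in> {e\<in>F1. v \<in> endpts G e}"
      then have ec: "e \<in> F1 \<inter> cutE G (edges G) C" using cutB_at_C[OF _ CA v] F1B by blast
      then obtain z where z: "z \<in> B" "endpts G e = {uf C, z}" using PC unfolding P_def by blast
      then have "v = uf C" using e vB by auto
      then show "e \<in> (if v = uf C then F1 \<inter> cutE G (edges G) C else {})" using ec by simp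
    next
      fix e assume e: "e \<in> (if v = uf C then F1 \<inter> cutE G (edges G) C else {})"
      then have h: "v = uf C" "e \<in> F1 \<inter> cutE G (edges G) C" by (auto split: if_splits)
      then obtain z where z: "z \<in> B" "endpts G e = {uf C, z}" using PC unfolding P_def by blast
      then show "e \<in> {e\<in>F1. v \<in> endpts G e}" using h by simp
    qed
    show ?thesis
    proof (cases "v = uf C")
      case True
      have E0: "{e\<in>Mf C. v \<in> endpts G e} = {}" using PC True unfolding P_def by blast
      have "{e\<in>F. v \<in> endpts G e} = F1 \<inter> cutE G (edges G) C" unfolding base F1part E0 using True by simp
      then show ?thesis using True unfolding deg_in_def by simp
    next
      case False
      then have "{e\<in>F. v \<in> endpts G e} = {e\<in>Mf C. v \<in> endpts G e}" using base F1part by simp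
      then show ?thesis using False unfolding deg_in_def by simp
    qed
  qed
  show ?thesis unfolding lambda_matchable_def
  proof (intro conjI exI)
    show "b \<in> verts G" using bB BV by blast
    show "F \<subseteq> edges G" using FE .
    show "deg_in F G b = 3" using degB[OF bB] deg_core_v[OF F1B bB] F1(3) by simp
    show "\<forall>u\<in>verts G - {b}. deg_in F G u = 1"
    proof
      fix v assume v: "v \<in> verts G - {b}"
      show "deg_in F G v = 1"
      proof (cases "v \<in> B")
        case True
        have "{v} \<in> verts (core G B) - {J, {b}}" using v_core[OF True] C_ne_v[OF J True] v by auto
        then show ?thesis using degB[OF True] deg_core_v[OF F1B True] F1(4) by simp
      next
        case False
        define C where "C = comp_of G B v"
        have CA: "C \<in> AA" unfolding C_def using A_in v False by blast
        have vC: "v \<in> C" unfolding C_def by (rule A_self)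
        show ?thesis
        proof (cases "C = J")
          case True
          then have vJ: "v \<in> J" using vC by simp
          have "psi J v = {v}" unfolding psi_def using vJ by simp
          then have "{v} \<in> verts (fragment G J)" unfolding frag_parts using v image_eqI[of "{v}" "psi J" v] by blast
          moreover have "{v} \<noteq> verts G - J" using vJ by blast
          ultimately have "deg_in F2 (fragment G J) {v} = 1" using F2(3) by blast
          then show ?thesis using degJ[OF vJ] deg_frag_in[OF J F2(1) vJ] by simp
        next
          case False
          then have CJ: "C \<in> AA - {J}" using CA by blast
          have PC: "P C (uf C) (Mf C)" using PM CJ by blast
          show ?thesis
          proof (cases "v = uf C")
            case True
            then show ?thesis using degC[OF CJ vC] one[OF CJ] by simp
          next
            case ne: False
            then have "v \<in> C - {uf C}" using vC by blast
            then have "deg_in (Mf C) G v = 1" using PC unfolding P_def by blast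
            then show ?thesis using degC[OF CJ vC] ne by simp
          qed
        qed
      qed
    qed
  qed
qed

end

theorem lemma3p5:
  fixes G :: "('v,'e) mgraph" and B :: "'v set" and b :: 'v
  assumes "cubic G" and "k_connected 3 G" and "barrier G B" and "B \<noteq> {}" and "b \<in> B"
  shows "lambda_matchable G b \<longleftrightarrow>
    (\<exists>J \<in> components G B.
        lambda_matchable_pair (core G B) J {b} \<and>
        lambda_matchable (fragment G J) (verts G - J))"
proof -
  interpret cg G B b using assms by unfold_locales
  show ?thesis using forward backward by blast
qed


end
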